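(* Consider $\mathrm U$ devices running slotted ALOHA whose batteries are always full (battery capacity $\mathrm E$), so that in each slot a device has a new update with probability $\alpha$ and then transmits it with $b_t\in[\mathrm E]$ energy units with probability $\pi_{\mathrm E,b_t}$, and such a transmission is decoded with probability $\omega_{b_t,\boldsymbol\ell_0}$, independently across slots. Let $\xi=\alpha\sum_{b_t=1}^{\mathrm E}\pi_{\mathrm E,b_t}\omega_{b_t,\boldsymbol\ell_0}\in(0,1]$ be the probability that a device successfully delivers a new update in a slot, and $\mathrm T=\mathrm U\xi$ the throughput. Then the discretized-AoI PMF, peak-AoI PMF, average AoI and age-violation probability of each device are $$\mathbb P[\widehat\Delta=\delta]=\mathbb P[\widetilde\Delta=\delta]=\xi(1-\xi)^{\delta-2},\quad\delta=2,3,\dots,$$ $$\bar\Delta=\frac12+\frac1\xi=\frac12+\frac{\mathrm U}{\mathrm T},\qquad \zeta(\theta)=(1-\xi)^{\theta-1}=\Big(1-\frac{\mathrm T}{\mathrm U}\Big)^{\theta-1},\quad\theta\ge1.$$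
   Context: Time is slotted (slot length $1$). $\boldsymbol\ell_0$ denotes the battery profile in which all other $\mathrm U-1$ devices have full battery, and $\omega_{b_t,\boldsymbol\ell_0}\in[0,1]$ is the given probability that an update transmitted with $b_t$ energy units is correctly decoded in this situation. The AoI of a device is reset to $1$ at the end of a slot in which it successfully delivers an update and grows linearly with slope $1$ otherwise. With successful-delivery slots $s_0<s_1<\dots$, the discretized AoI at the end of slot $s\in\{s_{i-1}+1,\dots,s_i\}$ is $s-s_{i-1}+1$ and the peak AoI of the $i$th period is $s_i-s_{i-1}+1$; $\mathbb P[\widehat\Delta=\delta]$ and $\mathbb P[\widetilde\Delta=\delta]$ are the stationary (long-run fraction) PMFs of these quantities over slots, resp. over periods; $\bar\Delta$ is the long-run time average of the AoI and $\zeta(\theta)$ the long-run fraction of time during which the AoI exceeds $\theta$. *)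

theory Defs
  imports "HOL-Probability.Probability"
begin

text \<open>Energy level chosen for a transmission when the battery is full (capacity E):
  level b in {1..E} with probability p b; level 0 encodes "no transmission"
  (the remaining probability mass, if the p b sum to less than one).\<close>
definition tx_pmf :: "nat \<Rightarrow> (nat \<Rightarrow> real) \<Rightarrow> nat pmf" where
  "tx_pmf E p = embed_pmf (\<lambda>b. if b = 0 then 1 - (\<Sum>c=1..E. p c)
                                  else if b \<le> E then p b else 0)"

text \<open>Outcome of one slot for one device: (new update arrived, energy level used
  (0 = no transmission), update decoded).\<close>
definition slot_pmf :: "nat \<Rightarrow> real \<Rightarrow> (nat \<Rightarrow> real) \<Rightarrow> (nat \<Rightarrow> real) \<Rightarrow> (bool \<times> nat \<times> bool) pmf" where
  "slot_pmf E alpha p omega =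
     bind_pmf (bernoulli_pmf alpha) (\<lambda>a.
     bind_pmf (if a then tx_pmf E p else return_pmf 0) (\<lambda>b.
     bind_pmf (if b = 0 then return_pmf False else bernoulli_pmf (omega b)) (\<lambda>d.
     return_pmf (a, b, d))))"

definition delivered :: "bool \<times> nat \<times> bool \<Rightarrow> bool" where
  "delivered z \<longleftrightarrow> fst z \<and> fst (snd z) \<noteq> 0 \<and> snd (snd z)"

definition succ_prob :: "nat \<Rightarrow> real \<Rightarrow> (nat \<Rightarrow> real) \<Rightarrow> (nat \<Rightarrow> real) \<Rightarrow> real" where
  "succ_prob E alpha p omega = alpha * (\<Sum>b=1..E. p b * omega b)"

text \<open>Sample path x: x s = successful delivery in slot s (slots 0,1,2,...).
  Convention: a virtual delivery in slot -1, i.e. AoI = 1 at time 0.\<close>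
definition last_succ :: "(nat \<Rightarrow> bool) \<Rightarrow> nat \<Rightarrow> int" where
  "last_succ x s = (if \<exists>k<s. x k then int (GREATEST k. k < s \<and> x k) else -1)"

text \<open>Discretized AoI at the end of slot s (before a possible reset).\<close>
definition disc_aoi :: "(nat \<Rightarrow> bool) \<Rightarrow> nat \<Rightarrow> int" where
  "disc_aoi x s = int s - last_succ x s + 1"

definition succ_slot :: "(nat \<Rightarrow> bool) \<Rightarrow> nat \<Rightarrow> nat" where
  "succ_slot x i = enumerate {s. x s} i"

text \<open>Peak AoI of the i-th period (i \<ge> 1): s_i - s_(i-1) + 1.\<close>
definition peak_aoi :: "(nat \<Rightarrow> bool) \<Rightarrow> nat \<Rightarrow> int" where
  "peak_aoi x i = int (succ_slot x i) - int (succ_slot x (i - 1)) + 1"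

text \<open>Continuous-time AoI; slot s occupies [s, s+1), a delivery in slot k resets the
  AoI to 1 at time k+1, slope 1 otherwise.\<close>
definition aoi :: "(nat \<Rightarrow> bool) \<Rightarrow> real \<Rightarrow> real" where
  "aoi x t = t - real_of_int (last_succ x (nat \<lfloor>t\<rfloor>))"

end

theory Submission
  imports Defs
begin


lemma tx_pmf_pmf:
  assumes "\<forall>b\<in>{1..E}. 0 \<le> p b" "(\<Sum>b=1..E. p b) \<le> 1"
  shows "pmf (tx_pmf E p) b = (if b = 0 then 1 - (\<Sum>c=1..E. p c) else if b \<le> E then p b else 0)"
proof -
  let ?f = "\<lambda>b. if b = 0 then 1 - (\<Sum>c=1..E. p c) else if b \<le> E then p b else 0"
  have nn: "\<And>b. 0 \<le> ?f b" using assms by auto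
  have "(\<integral>\<^sup>+x. ennreal (?f x) \<partial>count_space UNIV) = (\<Sum>x\<in>{0..E}. ennreal (?f x))"
    by (rule nn_integral_count_space') auto
  also have "\<dots> = ennreal (\<Sum>x\<in>{0..E}. ?f x)"
    using nn by (simp add: sum_ennreal)
  also have "(\<Sum>x\<in>{0..E}. ?f x) = ?f 0 + (\<Sum>x\<in>{1..E}. ?f x)"
    by (simp add: sum.atLeast_Suc_atMost)
  also have "(\<Sum>x\<in>{1..E}. ?f x) = (\<Sum>x\<in>{1..E}. p x)"
    by (rule sum.cong) auto
  finally have "(\<integral>\<^sup>+x. ennreal (?f x) \<partial>count_space UNIV) = 1" by simp
  then show ?thesis unfolding tx_pmf_def
    by (subst pmf_embed_pmf) (use nn in auto)
qed

lemma set_tx_pmf_sub: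
  assumes "\<forall>b\<in>{1..E}. 0 \<le> p b" "(\<Sum>b=1..E. p b) \<le> 1"
  shows "set_pmf (tx_pmf E p) \<subseteq> {0..E}"
  using tx_pmf_pmf[OF assms] by (auto simp: set_pmf_eq split: if_splits)

lemma prob_delivered:
  assumes "0 \<le> alpha" "alpha \<le> 1"
    and p: "\<forall>b\<in>{1..E}. 0 \<le> p b" "(\<Sum>b=1..E. p b) \<le> 1"
    and om: "\<forall>b\<in>{1..E}. 0 \<le> omega b \<and> omega b \<le> 1"
  shows "measure_pmf.prob (slot_pmf E alpha p omega) {z. delivered z} = succ_prob E alpha p omega"
proof -
  have inner: "(\<integral>\<^sup>+b. (if b = 0 then 0 else ennreal (omega b)) \<partial>measure_pmf (tx_pmf E p))
      = ennreal (\<Sum>b=1..E. p b * omega b)"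
  proof -
    have "(\<integral>\<^sup>+b. (if b = 0 then 0 else ennreal (omega b)) \<partial>measure_pmf (tx_pmf E p))
        = (\<Sum>b\<in>{0..E}. (if b = 0 then 0 else ennreal (omega b)) * pmf (tx_pmf E p) b)"
      by (rule nn_integral_measure_pmf_support) (use set_tx_pmf_sub[OF p] in auto)
    also have "\<dots> = (\<Sum>b\<in>{1..E}. ennreal (omega b) * pmf (tx_pmf E p) b)"
      by (simp add: sum.atLeast_Suc_atMost)
    also have "\<dots> = (\<Sum>b\<in>{1..E}. ennreal (p b * omega b))"
      by (rule sum.cong) (use p om in \<open>auto simp: tx_pmf_pmf[OF p] ennreal_mult' mult.commute\<close>)
    also have "\<dots> = ennreal (\<Sum>b=1..E. p b * omega b)"
      by (rule sum_ennreal) (use p om in auto)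
    finally show ?thesis .
  qed
  have "emeasure (measure_pmf (slot_pmf E alpha p omega)) {z. delivered z}
      = ennreal (succ_prob E alpha p omega)"
    unfolding slot_pmf_def
    apply (simp add: delivered_def assms)
  proof -
    have "(\<integral>\<^sup>+ x. \<integral>\<^sup>+ xa. indicator {z. fst z \<and> 0 < fst (snd z) \<and> snd (snd z)} (True, x, xa)
             \<partial>measure_pmf (if x = 0 then return_pmf False else bernoulli_pmf (omega x))
       \<partial>measure_pmf (tx_pmf E p)) = (\<integral>\<^sup>+b. (if b = 0 then 0 else ennreal (omega b)) \<partial>measure_pmf (tx_pmf E p))"
    proof (rule nn_integral_cong_AE, unfold AE_measure_pmf_iff, intro ballI)
      fix b assume "b \<in> set_pmf (tx_pmf E p)"
      then have b: "b \<le> E" using set_tx_pmf_sub[OF p] by auto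
      show "(\<integral>\<^sup>+ xa. indicator {z. fst z \<and> 0 < fst (snd z) \<and> snd (snd z)} (True, b, xa)
             \<partial>measure_pmf (if b = 0 then return_pmf False else bernoulli_pmf (omega b))) = (if b = 0 then 0 else ennreal (omega b))"
      proof (cases "b = 0")
        case False
        then have "0 \<le> omega b" "omega b \<le> 1" using om b by auto
        then show ?thesis using False by (simp add: indicator_def)
      qed (simp add: indicator_def)
    qed
    also have "\<dots> = ennreal (\<Sum>b=1..E. p b * omega b)" by (rule inner)
    finally have eqi: "(\<integral>\<^sup>+ x. \<integral>\<^sup>+ xa. indicator {z. fst z \<and> 0 < fst (snd z) \<and> snd (snd z)} (True, x, xa)
             \<partial>measure_pmf (if x = 0 then return_pmf False else bernoulli_pmf (omega x))
       \<partial>measure_pmf (tx_pmf E p)) = ennreal (\<Sum>b=1..E. p b * omega b)" .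
    show "(\<integral>\<^sup>+ x. \<integral>\<^sup>+ xa. indicator {z. fst z \<and> 0 < fst (snd z) \<and> snd (snd z)} (True, x, xa)
             \<partial>measure_pmf (if x = 0 then return_pmf False else bernoulli_pmf (omega x))
       \<partial>measure_pmf (tx_pmf E p)) * ennreal alpha = ennreal (succ_prob E alpha p omega)"
    proof -
      have "0 \<le> (\<Sum>b=1..E. p b * omega b)" using p om by (intro sum_nonneg) auto
      then show ?thesis using assms(1) unfolding eqi by (simp add: succ_prob_def ennreal_mult mult.commute)
    qed
  qed
  moreover have "0 \<le> succ_prob E alpha p omega"
    unfolding succ_prob_def using assms(1) p om by (intro mult_nonneg_nonneg sum_nonneg) auto
  ultimately show ?thesis
    by (simp add: measure_def)
qed


locale bern_seq = prob_space M for M :: "'a measure" +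
  fixes x :: "nat \<Rightarrow> 'a \<Rightarrow> bool" and xi :: real
  assumes meas_x: "\<And>j. {w\<in>space M. x j w} \<in> sets M"
    and window: "\<And>J c. finite J \<Longrightarrow> prob {w\<in>space M. \<forall>j\<in>J. x j w = c j} = (\<Prod>j\<in>J. if c j then xi else 1 - xi)"
    and xi_pos: "0 < xi" and xi_le: "xi \<le> 1"

lemma bern_inst:
  fixes M :: "'a measure" and Y :: "nat \<Rightarrow> 'a \<Rightarrow> bool \<times> nat \<times> bool"
  assumes PS: "prob_space M"
    and "0 \<le> alpha" and "alpha \<le> 1"
    and p: "\<forall>b\<in>{1..E}. 0 \<le> p b" "(\<Sum>b=1..E. p b) \<le> 1"
    and om: "\<forall>b\<in>{1..E}. 0 \<le> omega b \<and> omega b \<le> 1"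
    and ind: "prob_space.indep_vars M (\<lambda>_. count_space UNIV) Y UNIV"
    and dis: "\<forall>s. distr M (count_space UNIV) (Y s) = measure_pmf (slot_pmf E alpha p omega)"
    and pos: "succ_prob E alpha p omega > 0"
    and le1: "succ_prob E alpha p omega \<le> 1"
  shows "bern_seq M (\<lambda>s w. delivered (Y s w)) (succ_prob E alpha p omega)"
proof -
  interpret prob_space M by fact
  let ?xi = "succ_prob E alpha p omega"
  have rv: "Y s \<in> measurable M (count_space UNIV)" for s
    using ind unfolding indep_vars_def2 by auto
  have isets: "indep_sets (\<lambda>s. {Y s -` A \<inter> space M | A. A \<in> sets (count_space UNIV)}) UNIV"
    using ind unfolding indep_vars_def2 by auto
  have pd: "measure_pmf.prob (slot_pmf E alpha p omega) {z. delivered z} = ?xi"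
    by (rule prob_delivered) (use assms in auto)
  have pr: "prob (Y s -` {z. delivered z = c} \<inter> space M) = (if c then ?xi else 1 - ?xi)" for s c
  proof -
    have "prob (Y s -` {z. delivered z = c} \<inter> space M) = measure (distr M (count_space UNIV) (Y s)) {z. delivered z = c}"
      by (subst measure_distr) (use rv in auto)
    also have "\<dots> = measure_pmf.prob (slot_pmf E alpha p omega) {z. delivered z = c}"
      using dis by simp
    also have "\<dots> = (if c then ?xi else 1 - ?xi)"
    proof (cases c)
      case True then show ?thesis using pd by simp
    next
      case False
      have "{z. delivered z = c} = UNIV - {z. delivered z}" using False by auto
      then show ?thesis using False pd measure_pmf.prob_compl[of "{z. delivered z}" "slot_pmf E alpha p omega"]
        by simp
    qed
    finally show ?thesis .
  qed
  show ?thesis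
  proof
    show "{w \<in> space M. delivered (Y j w)} \<in> sets M" for j
    proof -
      have "{w \<in> space M. delivered (Y j w)} = Y j -` {z. delivered z} \<inter> space M" by auto
      then show ?thesis using rv[of j] by (auto intro: measurable_sets)
    qed
    show "0 < ?xi" by fact
    show "?xi \<le> 1" by fact
    fix J :: "nat set" and c assume fin: "finite J"
    show "prob {w \<in> space M. \<forall>j\<in>J. delivered (Y j w) = c j} = (\<Prod>j\<in>J. if c j then ?xi else 1 - ?xi)"
    proof (cases "J = {}")
      case True then show ?thesis by (simp add: prob_space)
    next
      case False
      have "{w \<in> space M. \<forall>j\<in>J. delivered (Y j w) = c j} = (\<Inter>j\<in>J. Y j -` {z. delivered z = c j} \<inter> space M)"
        using False by auto
      also have "prob \<dots> = (\<Prod>j\<in>J. prob (Y j -` {z. delivered z = c j} \<inter> space M))"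
      proof (rule indep_setsD[OF isets])
        show "\<forall>j\<in>J. Y j -` {z. delivered z = c j} \<inter> space M \<in> {Y j -` A \<inter> space M |A. A \<in> sets (count_space UNIV)}"
        proof
          fix j assume "j \<in> J"
          show "Y j -` {z. delivered z = c j} \<inter> space M \<in> {Y j -` A \<inter> space M |A. A \<in> sets (count_space UNIV)}"
            by (rule CollectI, rule exI[of _ "{z. delivered z = c j}"]) simp
        qed
      qed (use False fin in auto)
      finally show ?thesis using pr by simp
    qed
  qed
qed


lemma (in prob_space) cheb_subseq:
  fixes W :: "nat \<Rightarrow> 'a \<Rightarrow> real" and C :: real
  assumes meas[measurable]: "\<And>N. W N \<in> borel_measurable M"
    and int: "\<And>N. integrable M (\<lambda>w. (W N w)\<^sup>2)"
    and bnd: "\<And>N. expectation (\<lambda>w. (W N w)\<^sup>2) \<le> C * (real N + 1)"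
  shows "AE w in M. (\<lambda>k. W ((Suc k)\<^sup>2) w / real ((Suc k)\<^sup>2)) \<longlonglongrightarrow> 0"
proof -
  have "0 \<le> expectation (\<lambda>w. (W 0 w)\<^sup>2)" by (rule integral_nonneg_AE) simp
  moreover have "expectation (\<lambda>w. (W 0 w)\<^sup>2) \<le> C" using bnd[of 0] by simp
  ultimately have C0: "0 \<le> C" by linarith
  define A where "A m k = {w\<in>space M. (1/real(Suc m))\<^sup>2 * (real ((Suc k)\<^sup>2))\<^sup>2 \<le> (W ((Suc k)\<^sup>2) w)\<^sup>2}" for m k
  have Asets[measurable]: "A m k \<in> sets M" for m k unfolding A_def by measurable
  have Abnd: "prob (A m k) \<le> (2 * C * (real (Suc m))\<^sup>2) * inverse (real (Suc k) ^ 2)" for m k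
  proof -
    let ?c = "(1/real(Suc m))\<^sup>2 * (real ((Suc k)\<^sup>2))\<^sup>2"
    have cpos: "0 < ?c" by simp
    have "prob (A m k) \<le> expectation (\<lambda>w. (W ((Suc k)\<^sup>2) w)\<^sup>2) / ?c"
      unfolding A_def by (rule integral_Markov_inequality_measure[OF int]) (use cpos in auto)
    also have "\<dots> \<le> C * (real ((Suc k)\<^sup>2) + 1) / ?c"
      by (rule divide_right_mono[OF bnd]) (use cpos in simp)
    also have "\<dots> \<le> C * (2 * real ((Suc k)\<^sup>2)) / ?c"
      by (rule divide_right_mono) (use C0 cpos in \<open>auto intro!: mult_left_mono\<close>)
    also have "\<dots> = (2 * C * (real (Suc m))\<^sup>2) * inverse (real (Suc k) ^ 2)"
    proof -
      have aux: "K > 0 \<Longrightarrow> Mm > 0 \<Longrightarrow> C * (2 * K^2) / ((1/Mm)^2 * (K^2)^2) = (2*C*Mm^2)*inverse(K^2)" for K Mm :: real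
        by (simp add: field_simps power2_eq_square)
      show ?thesis using aux[of "real (Suc k)" "real (Suc m)"] by (simp only: of_nat_power)
    qed
    finally show ?thesis .
  qed
  have summ: "summable (\<lambda>k. inverse (real (Suc k) ^ 2))"
    using inverse_power_summable[of 2, where 'a=real] summable_Suc_iff[of "\<lambda>n. inverse (real n ^ 2)"]
    by simp
  have AEm: "AE w in M. eventually (\<lambda>k. w \<in> space M - A m k) sequentially" for m
  proof (rule borel_cantelli_AE1)
    show "summable (\<lambda>k. measure M (A m k))"
      by (rule summable_comparison_test'[OF summable_mult[OF summ, of "2 * C * (real (Suc m))\<^sup>2"]])
         (use Abnd in auto)
  qed (auto simp: emeasure_eq_measure)
  have "AE w in M. \<forall>m. eventually (\<lambda>k. w \<in> space M - A m k) sequentially"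
    by (rule AE_all_countable[THEN iffD2]) (use AEm in auto)
  then show ?thesis
  proof (rule AE_mp[OF _ AE_I2], intro impI)
    fix w assume wM: "w \<in> space M" and H: "\<forall>m. eventually (\<lambda>k. w \<in> space M - A m k) sequentially"
    show "(\<lambda>k. W ((Suc k)\<^sup>2) w / real ((Suc k)\<^sup>2)) \<longlonglongrightarrow> 0"
    proof (rule LIMSEQ_I)
      fix r :: real assume "0 < r"
      obtain m where m: "1 / real (Suc m) < r"
        using reals_Archimedean[OF \<open>0 < r\<close>] by (auto simp: inverse_eq_divide)
      from H[rule_format, of m] obtain no where no: "\<And>k. k \<ge> no \<Longrightarrow> w \<notin> A m k"
        by (auto simp: eventually_sequentially)
      show "\<exists>no. \<forall>k\<ge>no. norm (W ((Suc k)\<^sup>2) w / real ((Suc k)\<^sup>2) - 0) < r"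
      proof (intro exI allI impI)
        fix k assume "no \<le> k"
        then have "w \<notin> A m k" by (rule no)
        then have lt: "(1/real(Suc m))\<^sup>2 * (real ((Suc k)\<^sup>2))\<^sup>2 > (W ((Suc k)\<^sup>2) w)\<^sup>2"
          using wM unfolding A_def by auto
        have "\<bar>W ((Suc k)\<^sup>2) w\<bar> < (1/real(Suc m)) * real ((Suc k)\<^sup>2)"
        proof -
          have "(W ((Suc k)\<^sup>2) w)\<^sup>2 < ((1/real(Suc m)) * real ((Suc k)\<^sup>2))\<^sup>2"
            unfolding power_mult_distrib by (rule lt)
          then show ?thesis
            using power2_less_imp_less[of "\<bar>W ((Suc k)\<^sup>2) w\<bar>" "1 / real (Suc m) * real ((Suc k)\<^sup>2)"]
            by (simp del: of_nat_Suc of_nat_power)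
        qed
        then have "\<bar>W ((Suc k)\<^sup>2) w\<bar> / real ((Suc k)\<^sup>2) < 1/real(Suc m)"
          by (simp add: divide_less_eq del: of_nat_Suc power2_eq_square)
        then show "norm (W ((Suc k)\<^sup>2) w / real ((Suc k)\<^sup>2) - 0) < r"
          using m by (simp add: abs_divide del: of_nat_Suc)
      qed
    qed
  qed
qed


lemma sqrt_bracket:
  fixes N :: nat assumes "N \<ge> 1"
  shows "(Suc (nat \<lfloor>sqrt (real N)\<rfloor> - 1))\<^sup>2 \<le> N \<and> N < (Suc (Suc (nat \<lfloor>sqrt (real N)\<rfloor> - 1)))\<^sup>2"
proof -
  define r where "r = nat \<lfloor>sqrt (real N)\<rfloor>"
  have s1: "sqrt (real N) \<ge> 1" using assms by simp
  have r1: "r \<ge> 1" unfolding r_def using s1 by linarith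
  have "real r \<le> sqrt (real N)" unfolding r_def using s1 by linarith
  then have "(real r)\<^sup>2 \<le> real N"
    by (metis of_nat_0_le_iff power_mono real_sqrt_pow2 of_nat_0_le_iff)
  then have a: "r\<^sup>2 \<le> N" by (metis of_nat_le_iff of_nat_power)
  have "sqrt (real N) < real r + 1" unfolding r_def using s1 by linarith
  moreover have "sqrt ((real r + 1)\<^sup>2) = real r + 1" by simp
  ultimately have "sqrt (real N) < sqrt ((real r + 1)\<^sup>2)" by simp
  then have "real N < (real r + 1)\<^sup>2" by (simp only: real_sqrt_less_iff)
  then have b: "N < (r + 1)\<^sup>2" by (metis of_nat_less_iff of_nat_power of_nat_1 of_nat_add)
  have "Suc (r - 1) = r" using r1 by simp
  then show ?thesis using a b unfolding r_def[symmetric] by simp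
qed

lemma interp_sq:
  fixes S :: "nat \<Rightarrow> real"
  assumes mono: "\<And>m n. m \<le> n \<Longrightarrow> S m \<le> S n" and nn: "\<And>n. 0 \<le> S n"
    and lim: "(\<lambda>k. S ((Suc k)\<^sup>2) / real ((Suc k)\<^sup>2)) \<longlonglongrightarrow> a"
  shows "(\<lambda>N. S N / real N) \<longlonglongrightarrow> a"
proof -
  define f where "f k = S ((Suc k)\<^sup>2) / real ((Suc k)\<^sup>2)" for k
  define q where "q N = nat \<lfloor>sqrt (real N)\<rfloor> - 1" for N :: nat
  have br: "N \<ge> 1 \<Longrightarrow> (Suc (q N))\<^sup>2 \<le> N \<and> N < (Suc (Suc (q N)))\<^sup>2" for N
    unfolding q_def by (rule sqrt_bracket)
  have qlim: "filterlim q at_top sequentially"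
    unfolding filterlim_at_top
  proof
    fix Z :: nat
    show "eventually (\<lambda>N. Z \<le> q N) sequentially"
      unfolding eventually_sequentially
    proof (intro exI allI impI)
      fix N assume N: "(Suc (Suc Z))\<^sup>2 \<le> N"
      then have "N \<ge> 1" by (simp add: power2_eq_square)
      from br[OF this] have "(Suc (Suc Z))\<^sup>2 < (Suc (Suc (q N)))\<^sup>2" using N by linarith
      then have "Suc (Suc Z) < Suc (Suc (q N))" using power_less_imp_less_base by blast
      then show "Z \<le> q N" by simp
    qed
  qed
  define g where "g k = (real (Suc k) / real (Suc (Suc k)))\<^sup>2" for k
  define h where "h k = (real (Suc (Suc k)) / real (Suc k))\<^sup>2" for k
  have g1: "g \<longlonglongrightarrow> 1"
    unfolding g_def using tendsto_power[OF LIMSEQ_Suc[OF LIMSEQ_n_over_Suc_n[where 'a=real]], of 2] by simp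
  have h1: "h \<longlonglongrightarrow> 1"
    unfolding h_def using tendsto_power[OF LIMSEQ_Suc[OF LIMSEQ_Suc_n_over_n[where 'a=real]], of 2] by simp
  have fa: "f \<longlonglongrightarrow> a" using lim unfolding f_def .
  have low: "(\<lambda>N. f (q N) * g (q N)) \<longlonglongrightarrow> a"
    using filterlim_compose[OF tendsto_mult[OF fa g1] qlim] by simp
  have up: "(\<lambda>N. f (Suc (q N)) * h (q N)) \<longlonglongrightarrow> a"
    using filterlim_compose[OF tendsto_mult[OF LIMSEQ_Suc[OF fa] h1] qlim] by simp
  show ?thesis
  proof (rule tendsto_sandwich[OF _ _ low up])
    show "eventually (\<lambda>N. f (q N) * g (q N) \<le> S N / real N) sequentially"
      unfolding eventually_sequentially
    proof (intro exI allI impI)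
      fix N :: nat assume N: "1 \<le> N"
      define k where "k = q N"
      have b1: "(Suc k)\<^sup>2 \<le> N" and b2: "N < (Suc (Suc k))\<^sup>2" using br[OF N] unfolding k_def by auto
      have "f k * g k = S ((Suc k)\<^sup>2) / real ((Suc (Suc k))\<^sup>2)"
        unfolding f_def g_def of_nat_power power_divide by (simp del: of_nat_Suc)
      also have "\<dots> \<le> S N / real ((Suc (Suc k))\<^sup>2)"
        by (rule divide_right_mono[OF mono[OF b1]]) simp
      also have "\<dots> \<le> S N / real N"
      proof (rule divide_left_mono)
        show "real N \<le> real ((Suc (Suc k))\<^sup>2)" using b2 by linarith
      qed (use nn N in auto)
      finally show "f (q N) * g (q N) \<le> S N / real N" unfolding k_def .
    qed
    show "eventually (\<lambda>N. S N / real N \<le> f (Suc (q N)) * h (q N)) sequentially"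
      unfolding eventually_sequentially
    proof (intro exI allI impI)
      fix N :: nat assume N: "1 \<le> N"
      define k where "k = q N"
      have b1: "(Suc k)\<^sup>2 \<le> N" and b2: "N < (Suc (Suc k))\<^sup>2" using br[OF N] unfolding k_def by auto
      have "S N / real N \<le> S N / real ((Suc k)\<^sup>2)"
      proof (rule divide_left_mono)
        show "real ((Suc k)\<^sup>2) \<le> real N" using b1 by linarith
      qed (use nn N in auto)
      also have "\<dots> \<le> S ((Suc (Suc k))\<^sup>2) / real ((Suc k)\<^sup>2)"
        by (rule divide_right_mono[OF mono]) (use b2 in auto)
      also have "\<dots> = f (Suc k) * h k"
        unfolding f_def h_def of_nat_power power_divide by (simp del: of_nat_Suc)
      finally show "S N / real N \<le> f (Suc (q N)) * h (q N)" unfolding k_def .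
    qed
  qed
qed


lemma (in prob_space) slln_sum:
  fixes Z :: "nat \<Rightarrow> 'a \<Rightarrow> real" and m :: "nat \<Rightarrow> real"
  assumes meas[measurable]: "\<And>s. Z s \<in> borel_measurable M"
    and nn: "\<And>s w. w \<in> space M \<Longrightarrow> 0 \<le> Z s w"
    and int: "\<And>N. integrable M (\<lambda>w. ((\<Sum>s<N. Z s w) - m N)\<^sup>2)"
    and var: "\<And>N. expectation (\<lambda>w. ((\<Sum>s<N. Z s w) - m N)\<^sup>2) \<le> C * (real N + 1)"
    and mean: "(\<lambda>N. m N / real N) \<longlonglongrightarrow> p"
  shows "AE w in M. (\<lambda>N. (\<Sum>s<N. Z s w) / real N) \<longlonglongrightarrow> p"
proof -
  have AEH: "AE w in M. (\<lambda>k. ((\<Sum>s<(Suc k)\<^sup>2. Z s w) - m ((Suc k)\<^sup>2)) / real ((Suc k)\<^sup>2)) \<longlonglongrightarrow> 0"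
    by (rule cheb_subseq[of "\<lambda>N w. (\<Sum>s<N. Z s w) - m N" C]) (use int var in auto)
  have msub: "(\<lambda>k. m ((Suc k)\<^sup>2) / real ((Suc k)\<^sup>2)) \<longlonglongrightarrow> p"
  proof -
    have "strict_mono (\<lambda>k::nat. (Suc k)\<^sup>2)"
      by (rule strict_monoI) (simp add: power_strict_mono)
    then have "filterlim (\<lambda>k::nat. (Suc k)\<^sup>2) at_top sequentially"
      by (rule filterlim_subseq)
    from filterlim_compose[OF mean this] show ?thesis by simp
  qed
  show ?thesis
  proof (rule AE_mp[OF AEH AE_I2], intro impI)
    fix w assume w: "w \<in> space M"
      and H: "(\<lambda>k. ((\<Sum>s<(Suc k)\<^sup>2. Z s w) - m ((Suc k)\<^sup>2)) / real ((Suc k)\<^sup>2)) \<longlonglongrightarrow> 0"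
    have "(\<lambda>k. ((\<Sum>s<(Suc k)\<^sup>2. Z s w) - m ((Suc k)\<^sup>2)) / real ((Suc k)\<^sup>2) + m ((Suc k)\<^sup>2) / real ((Suc k)\<^sup>2)) \<longlonglongrightarrow> 0 + p"
      by (rule tendsto_add[OF H msub])
    then have "(\<lambda>k. (\<Sum>s<(Suc k)\<^sup>2. Z s w) / real ((Suc k)\<^sup>2)) \<longlonglongrightarrow> p"
      by (simp add: diff_divide_distrib)
    then show "(\<lambda>N. (\<Sum>s<N. Z s w) / real N) \<longlonglongrightarrow> p"
    proof (rule interp_sq[rotated 2])
      show "(\<Sum>s<m. Z s w) \<le> (\<Sum>s<n. Z s w)" if "m \<le> n" for m n
        by (rule sum_mono2) (use that nn w in auto)
      show "0 \<le> (\<Sum>s<n. Z s w)" for n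
        by (rule sum_nonneg) (use nn w in auto)
    qed
  qed
qed

lemma (in prob_space) int_lin:
  fixes f g h :: "'a \<Rightarrow> real"
  assumes [simp]: "integrable M f" "integrable M g" "integrable M h"
  shows "expectation (\<lambda>w. f w - a * g w - b * h w + c) = expectation f - a * expectation g - b * expectation h + c"
proof -
  have "expectation (\<lambda>w. f w - a * g w - b * h w + c) = expectation (\<lambda>w. f w - a * g w - b * h w) + expectation (\<lambda>w. c)"
    by (rule Bochner_Integration.integral_add) auto
  also have "expectation (\<lambda>w. f w - a * g w - b * h w) = expectation (\<lambda>w. f w - a * g w) - expectation (\<lambda>w. b * h w)"
    by (rule Bochner_Integration.integral_diff) auto
  also have "expectation (\<lambda>w. f w - a * g w) = expectation f - expectation (\<lambda>w. a * g w)"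
    by (rule Bochner_Integration.integral_diff) auto
  finally show ?thesis by (simp add: prob_space)
qed

lemma (in prob_space) cov_ind:
  assumes [measurable]: "A \<in> events" "B \<in> events"
  shows "expectation (\<lambda>w. (indicator A w - prob A) * (indicator B w - prob B)) = prob (A \<inter> B) - prob A * prob B"
proof -
  have eq: "(\<lambda>w. (indicator A w - prob A) * (indicator B w - prob B)) =
     (\<lambda>w. indicator (A \<inter> B) w - prob B * indicator A w - prob A * indicator B w + prob A * prob B)"
    by (auto simp: indicator_def fun_eq_iff algebra_simps)
  have i1: "integrable M (indicator C :: 'a \<Rightarrow> real)" if "C \<in> events" for C
    using that by (simp add: emeasure_eq_measure)
  have "A \<inter> B \<in> events" by simp
  note ii = i1[OF this] i1[OF assms(1)] i1[OF assms(2)]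
  have "expectation (\<lambda>w. indicator (A \<inter> B) w - prob B * indicator A w - prob A * indicator B w + prob A * prob B)
     = expectation (indicator (A \<inter> B)) - prob B * expectation (indicator A) - prob A * expectation (indicator B) + prob A * prob B"
    by (rule int_lin) (use ii in auto)
  then show ?thesis unfolding eq
    by (simp add: Int_absorb1 sets.sets_into_space)
qed


lemma sum_if_card: "(\<Sum>t<(N::nat). if P t then 1 else 0 :: real) = real (card {t\<in>{..<N}. P t})"
  using sum_of_bool_eq[of "{..<N}" P, where 'a=real] by (simp add: Int_def of_bool_def)

lemma sum_ind_card: "(\<Sum>s<(N::nat). indicator (A s) w :: real) = real (card {s\<in>{..<N}. w \<in> A s})"
  using sum_if_card[where N=N and P="\<lambda>s. w \<in> A s"] by (simp add: indicator_def Int_def)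

lemma card_near: "card {t\<in>{..<N}. s \<le> t + K \<and> t \<le> s + K} \<le> 2 * K + 1"
proof -
  have "{t\<in>{..<N}. s \<le> t + K \<and> t \<le> s + K} \<subseteq> {s - K..s + K}" by auto
  then have "card {t\<in>{..<N}. s \<le> t + K \<and> t \<le> s + K} \<le> card {s - K..s + K}"
    by (rule card_mono[rotated]) simp
  also have "\<dots> \<le> 2 * K + 1" by simp
  finally show ?thesis .
qed

lemma (in prob_space) slln_events:
  fixes A :: "nat \<Rightarrow> 'a set" and K :: nat
  assumes ev[measurable]: "\<And>s. A s \<in> events"
    and far: "\<And>s t. s + K < t \<Longrightarrow> prob (A s \<inter> A t) = prob (A s) * prob (A t)"
    and mean: "(\<lambda>N. (\<Sum>s<N. prob (A s)) / real N) \<longlonglongrightarrow> p"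
  shows "AE w in M. (\<lambda>N. real (card {s\<in>{..<N}. w \<in> A s}) / real N) \<longlonglongrightarrow> p"
proof -
  let ?Z = "\<lambda>s w. indicator (A s) w :: real"
  let ?m = "\<lambda>N. (\<Sum>s<N. prob (A s))"
  have sq: "((\<Sum>s<N. ?Z s w) - ?m N)\<^sup>2 = (\<Sum>s<N. \<Sum>t<N. (?Z s w - prob (A s)) * (?Z t w - prob (A t)))" for N w
    by (simp add: sum_subtractf[symmetric] power2_eq_square sum_product)
  have bterm: "integrable M (\<lambda>w. (?Z s w - prob (A s)) * (?Z t w - prob (A t)))" for s t
  proof (rule integrable_const_bound[where B=1])
    show "AE w in M. norm ((?Z s w - prob (A s)) * (?Z t w - prob (A t))) \<le> 1"
    proof (rule AE_I2)
      fix w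
      have "\<bar>?Z s w - prob (A s)\<bar> \<le> 1" "\<bar>?Z t w - prob (A t)\<bar> \<le> 1"
        by (auto simp: indicator_def)
      then show "norm ((?Z s w - prob (A s)) * (?Z t w - prob (A t))) \<le> 1"
        by (simp add: abs_mult mult_le_one)
    qed
  qed simp
  have intsq: "integrable M (\<lambda>w. ((\<Sum>s<N. ?Z s w) - ?m N)\<^sup>2)" for N
    unfolding sq using bterm by auto
  have var: "expectation (\<lambda>w. ((\<Sum>s<N. ?Z s w) - ?m N)\<^sup>2) \<le> real (2 * K + 1) * (real N + 1)" for N
  proof -
    have "expectation (\<lambda>w. ((\<Sum>s<N. ?Z s w) - ?m N)\<^sup>2)
        = (\<Sum>s<N. \<Sum>t<N. expectation (\<lambda>w. (?Z s w - prob (A s)) * (?Z t w - prob (A t))))"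
      unfolding sq using bterm
      by (simp add: Bochner_Integration.integral_sum)
    also have "\<dots> = (\<Sum>s<N. \<Sum>t<N. prob (A s \<inter> A t) - prob (A s) * prob (A t))"
      by (simp add: cov_ind)
    also have "\<dots> \<le> (\<Sum>s<N. \<Sum>t<N. (if s \<le> t + K \<and> t \<le> s + K then 1 else 0))"
    proof (intro sum_mono)
      fix s t
      show "prob (A s \<inter> A t) - prob (A s) * prob (A t) \<le> (if s \<le> t + K \<and> t \<le> s + K then 1 else 0)"
      proof (cases "s \<le> t + K \<and> t \<le> s + K")
        case True
        have "prob (A s \<inter> A t) \<le> 1" by simp
        moreover have "0 \<le> prob (A s) * prob (A t)" by simp
        moreover have "(if s \<le> t + K \<and> t \<le> s + K then 1 else 0) = (1::real)" using True by simp
        ultimately show ?thesis by linarith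
      next
        case False
        then have "s + K < t \<or> t + K < s" by auto
        then have "prob (A s \<inter> A t) = prob (A s) * prob (A t)"
          using far[of s t] far[of t s] by (auto simp: Int_commute mult.commute)
        then show ?thesis using False by simp
      qed
    qed
    also have "\<dots> = (\<Sum>s<N. real (card {t\<in>{..<N}. s \<le> t + K \<and> t \<le> s + K}))"
      by (intro sum.cong refl) (rule sum_if_card)
    also have "\<dots> \<le> (\<Sum>s<N. real (2 * K + 1))"
      by (intro sum_mono of_nat_mono card_near)
    also have "\<dots> \<le> real (2 * K + 1) * (real N + 1)"
      by simp
    finally show ?thesis .
  qed
  have "AE w in M. (\<lambda>N. (\<Sum>s<N. ?Z s w) / real N) \<longlonglongrightarrow> p"
    by (rule slln_sum[OF _ _ intsq var mean]) auto
  then show ?thesis by (simp add: sum_ind_card)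
qed


lemma last_succ_0: "last_succ f 0 = -1"
  by (simp add: last_succ_def)

lemma last_succ_Suc: "last_succ f (Suc s) = (if f s then int s else last_succ f s)"
proof (cases "f s")
  case True
  have "(GREATEST k. k < Suc s \<and> f k) = s"
    by (rule Greatest_equality) (use True in auto)
  then show ?thesis using True by (auto simp: last_succ_def)
next
  case False
  have eq: "(\<lambda>k. k < Suc s \<and> f k) = (\<lambda>k. k < s \<and> f k)"
    using False by (auto simp: fun_eq_iff less_Suc_eq)
  have "(\<exists>k<Suc s. f k) = (\<exists>k<s. f k)" using False by (auto simp: less_Suc_eq)
  then show ?thesis using False by (simp add: last_succ_def eq)
qed

lemma disc_aoi_0: "disc_aoi f 0 = 2"
  by (simp add: disc_aoi_def last_succ_0)

lemma disc_aoi_Suc: "disc_aoi f (Suc s) = (if f s then 2 else disc_aoi f s + 1)"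
  by (simp add: disc_aoi_def last_succ_Suc)

lemma disc_aoi_ge: "disc_aoi f s \<ge> int k + 2 \<longleftrightarrow> k \<le> s \<and> (\<forall>j\<in>{s-k..<s}. \<not> f j)"
proof (induction s arbitrary: k)
  case 0
  then show ?case by (simp add: disc_aoi_0)
next
  case (Suc s)
  show ?case
  proof (cases "f s")
    case True
    then show ?thesis
      by (cases k) (auto simp: disc_aoi_Suc)
  next
    case False
    show ?thesis
    proof (cases k)
      case 0
      have "disc_aoi f (Suc s) \<ge> 2" 
        using Suc.IH[of 0] False by (simp add: disc_aoi_Suc)
      then show ?thesis using 0 by simp
    next
      case (Suc k')
      have "disc_aoi f (Suc s) \<ge> int k + 2 \<longleftrightarrow> disc_aoi f s \<ge> int k' + 2"
        using False Suc by (simp add: disc_aoi_Suc add.commute)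
      also have "\<dots> \<longleftrightarrow> k' \<le> s \<and> (\<forall>j\<in>{s-k'..<s}. \<not> f j)" by (rule Suc.IH)
      also have "\<dots> \<longleftrightarrow> k \<le> Suc s \<and> (\<forall>j\<in>{Suc s-k..<Suc s}. \<not> f j)"
        using False Suc by (auto simp: less_Suc_eq)
      finally show ?thesis .
    qed
  qed
qed

lemma disc_aoi_ge2: "disc_aoi f s \<ge> 2"
  using disc_aoi_ge[of 0 f s] by simp

lemma disc_aoi_cong: "(\<And>j. j < s \<Longrightarrow> f j = g j) \<Longrightarrow> disc_aoi f s = disc_aoi g s"
  by (induction s) (auto simp: disc_aoi_0 disc_aoi_Suc)


lemma lim_frac_shift: "(\<lambda>N. c * real (N - k) / real N) \<longlonglongrightarrow> (c::real)"
proof -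
  have "(\<lambda>N. c - c * real k * inverse (real N)) \<longlonglongrightarrow> c - c * real k * 0"
    by (intro tendsto_intros lim_inverse_n)
  then have "(\<lambda>N. c - c * real k * inverse (real N)) \<longlonglongrightarrow> c" by simp
  moreover have "eventually (\<lambda>N. c - c * real k * inverse (real N) = c * real (N - k) / real N) sequentially"
    unfolding eventually_sequentially
    by (rule exI[of _ "Suc k"]) (auto simp: field_simps of_nat_diff)
  ultimately show ?thesis by (rule Lim_transform_eventually)
qed

context bern_seq
begin

lemma meas_eq: "{w\<in>space M. x j w = c} \<in> events"
proof (cases c)
  case True then show ?thesis using meas_x[of j] by simp
next
  case False
  have "{w\<in>space M. x j w = c} = space M - {w\<in>space M. x j w}" using False by auto
  then show ?thesis using meas_x[of j] by auto
qed

lemma meas_window: "finite J \<Longrightarrow> {w\<in>space M. \<forall>j\<in>J. x j w = c j} \<in> events"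
proof (induction J rule: finite_induct)
  case empty then show ?case by simp
next
  case (insert j J)
  have "{w\<in>space M. \<forall>i\<in>insert j J. x i w = c i} = {w\<in>space M. x j w = c j} \<inter> {w\<in>space M. \<forall>i\<in>J. x i w = c i}"
    by auto
  then show ?case using insert meas_eq[of j "c j"] by auto
qed

lemma window_union:
  assumes "finite A" "finite B" "A \<inter> B = {}"
  shows "prob ({w\<in>space M. \<forall>j\<in>A. x j w = c j} \<inter> {w\<in>space M. \<forall>j\<in>B. x j w = d j})
       = prob {w\<in>space M. \<forall>j\<in>A. x j w = c j} * prob {w\<in>space M. \<forall>j\<in>B. x j w = d j}"
proof -
  let ?e = "\<lambda>j. if j \<in> A then c j else d j"
  let ?f = "\<lambda>b. if b then xi else 1 - xi"
  have "{w\<in>space M. \<forall>j\<in>A. x j w = c j} \<inter> {w\<in>space M. \<forall>j\<in>B. x j w = d j} = {w\<in>space M. \<forall>j\<in>A \<union> B. x j w = ?e j}"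
    using assms(3) by auto
  then have "prob ({w\<in>space M. \<forall>j\<in>A. x j w = c j} \<inter> {w\<in>space M. \<forall>j\<in>B. x j w = d j}) = (\<Prod>j\<in>A \<union> B. ?f (?e j))"
    using window assms by simp
  also have "\<dots> = (\<Prod>j\<in>A. ?f (?e j)) * (\<Prod>j\<in>B. ?f (?e j))"
    by (rule prod.union_disjoint) (use assms in auto)
  also have "(\<Prod>j\<in>A. ?f (?e j)) = (\<Prod>j\<in>A. ?f (c j))" by (rule prod.cong) auto
  also have "(\<Prod>j\<in>B. ?f (?e j)) = (\<Prod>j\<in>B. ?f (d j))" by (rule prod.cong) (use assms(3) in auto)
  finally show ?thesis using window assms by simp
qed

definition Run :: "nat \<Rightarrow> bool \<Rightarrow> nat \<Rightarrow> 'a set" where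
  "Run k e s = {w\<in>space M. k \<le> s \<and> (\<forall>j\<in>{s-k..<s}. \<not> x j w) \<and> (e \<longrightarrow> x s w)}"

definition RJ :: "nat \<Rightarrow> bool \<Rightarrow> nat \<Rightarrow> nat set" where
  "RJ k e s = {s-k..<s} \<union> (if e then {s} else {})"

lemma Run_window: "k \<le> s \<Longrightarrow> Run k e s = {w\<in>space M. \<forall>j\<in>RJ k e s. x j w = (j = s)}"
  unfolding Run_def RJ_def by auto

lemma Run_empty: "s < k \<Longrightarrow> Run k e s = {}"
  unfolding Run_def by auto

lemma finite_RJ: "finite (RJ k e s)" by (simp add: RJ_def)

lemma Run_sets[measurable]: "Run k e s \<in> events"
  by (cases "k \<le> s") (simp_all add: Run_window meas_window finite_RJ Run_empty)

lemma prob_Run: "prob (Run k e s) = (if k \<le> s then (1 - xi)^k * (if e then xi else 1) else 0)"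
proof (cases "k \<le> s")
  case True
  let ?f = "\<lambda>j. if j = s then xi else 1 - xi"
  have "prob (Run k e s) = (\<Prod>j\<in>RJ k e s. ?f j)"
    using True by (simp add: Run_window window finite_RJ)
  also have "\<dots> = (1 - xi)^k * (if e then xi else 1)"
  proof -
    have p1: "(\<Prod>j\<in>{s-k..<s}. ?f j) = (1 - xi)^k"
      using True by simp
    show ?thesis
    proof (cases e)
      case True
      then have "(\<Prod>j\<in>RJ k e s. ?f j) = ?f s * (\<Prod>j\<in>{s-k..<s}. ?f j)"
        unfolding RJ_def by (subst Un_commute) (simp add: prod.insert)
      then show ?thesis using p1 True by simp
    next
      case False then show ?thesis using p1 by (simp add: RJ_def)
    qed
  qed
  finally show ?thesis using True by simp
qed (simp add: Run_empty)

lemma Run_far: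
  assumes "s + k < t"
  shows "prob (Run k e s \<inter> Run k e t) = prob (Run k e s) * prob (Run k e t)"
proof (cases "k \<le> s")
  case True
  have "k \<le> t" using assms by simp
  have "RJ k e s \<inter> RJ k e t = {}"
    using assms unfolding RJ_def by auto
  then show ?thesis
    using True \<open>k \<le> t\<close> by (simp add: Run_window window_union finite_RJ)
next
  case False then show ?thesis by (simp add: Run_empty)
qed

lemma Run_slln:
  "AE w in M. (\<lambda>N. real (card {s\<in>{..<N}. w \<in> Run k e s}) / real N) \<longlonglongrightarrow> (1 - xi)^k * (if e then xi else 1)"
proof (rule slln_events[where K=k])
  let ?c = "(1 - xi)^k * (if e then xi else 1)"
  have "(\<Sum>s<N. prob (Run k e s)) = ?c * real (N - k)" for N
  proof -
    have "(\<Sum>s<N. prob (Run k e s)) = (\<Sum>s<N. if k \<le> s then ?c else 0)"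
      by (simp add: prob_Run)
    also have "\<dots> = ?c * (\<Sum>s<N. if k \<le> s then 1 else 0)"
      by (subst sum_distrib_left) (rule sum.cong, auto)
    also have "(\<Sum>s<N. if k \<le> s then 1 else 0 :: real) = real (card {s\<in>{..<N}. k \<le> s})"
      by (rule sum_if_card)
    also have "{s\<in>{..<N}. k \<le> s} = {k..<N}" by auto
    finally show ?thesis by simp
  qed
  then show "(\<lambda>N. (\<Sum>s<N. prob (Run k e s)) / real N) \<longlonglongrightarrow> ?c"
    using lim_frac_shift[of ?c k] by simp
qed (auto intro: Run_far)

end


context bern_seq
begin

definition Wn :: "nat \<Rightarrow> nat set \<Rightarrow> 'a set" where
  "Wn t A = {w\<in>space M. \<forall>j\<in>{..<t}. x j w = (j \<in> A)}"

definition Wn' :: "nat \<Rightarrow> nat set \<Rightarrow> 'a set" where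
  "Wn' t A = {w\<in>space M. \<forall>j\<in>insert t {..<t}. x j w = (j \<in> insert t A)}"

lemma Wn_sets[measurable]: "Wn t A \<in> events" "Wn' t A \<in> events"
  unfolding Wn_def Wn'_def by (rule meas_window, simp)+

lemma prob_Wn': "A \<subseteq> {..<t} \<Longrightarrow> prob (Wn' t A) = xi * prob (Wn t A)"
proof -
  assume A: "A \<subseteq> {..<t}"
  let ?f = "\<lambda>b. if b then xi else 1 - xi"
  have "prob (Wn' t A) = (\<Prod>j\<in>insert t {..<t}. ?f (j \<in> insert t A))"
    unfolding Wn'_def by (rule window) simp
  also have "\<dots> = ?f True * (\<Prod>j\<in>{..<t}. ?f (j \<in> insert t A))"
    by (subst prod.insert) auto
  also have "(\<Prod>j\<in>{..<t}. ?f (j \<in> insert t A)) = (\<Prod>j\<in>{..<t}. ?f (j \<in> A))"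
    by (rule prod.cong) auto
  also have "\<dots> = prob (Wn t A)"
    unfolding Wn_def by (rule window[symmetric]) simp
  finally show ?thesis by simp
qed

lemma ind_Wn: "w \<in> space M \<Longrightarrow> A \<subseteq> {..<t} \<Longrightarrow> indicator (Wn t A) w = (if A = {j. j < t \<and> x j w} then 1 else (0::real))"
  unfolding Wn_def by (auto simp: indicator_def)

lemma ind_Wn': "w \<in> space M \<Longrightarrow> A \<subseteq> {..<t} \<Longrightarrow> (if x t w then 1 else 0) * indicator (Wn t A) w = (indicator (Wn' t A) w :: real)"
  unfolding Wn_def Wn'_def by (auto simp: indicator_def)

lemma prefix_repr:
  fixes F :: "(nat \<Rightarrow> bool) \<Rightarrow> real"
  assumes cong: "\<And>f g. (\<And>j. j < t \<Longrightarrow> f j = g j) \<Longrightarrow> F f = F g" and w: "w \<in> space M"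
  shows "F (\<lambda>j. x j w) = (\<Sum>A\<in>Pow {..<t}. F (\<lambda>j. j \<in> A) * indicator (Wn t A) w)"
proof -
  let ?A0 = "{j. j < t \<and> x j w}"
  have "(\<Sum>A\<in>Pow {..<t}. F (\<lambda>j. j \<in> A) * indicator (Wn t A) w) = (\<Sum>A\<in>Pow {..<t}. if A = ?A0 then F (\<lambda>j. j \<in> A) else 0)"
    by (rule sum.cong) (use w in \<open>auto simp: ind_Wn\<close>)
  also have "\<dots> = F (\<lambda>j. j \<in> ?A0)"
    by (subst sum.delta) auto
  also have "\<dots> = F (\<lambda>j. x j w)"
    by (rule cong) auto
  finally show ?thesis by simp
qed

lemma prefix_meas:
  fixes F :: "(nat \<Rightarrow> bool) \<Rightarrow> real"
  assumes cong: "\<And>f g. (\<And>j. j < t \<Longrightarrow> f j = g j) \<Longrightarrow> F f = F g"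
  shows "(\<lambda>w. F (\<lambda>j. x j w)) \<in> borel_measurable M"
proof -
  have "(\<lambda>w. (\<Sum>A\<in>Pow {..<t}. F (\<lambda>j. j \<in> A) * indicator (Wn t A) w)) \<in> borel_measurable M"
    by measurable
  then show ?thesis
    by (rule measurable_cong[THEN iffD2, rotated]) (rule prefix_repr[OF cong])
qed

lemma prefix_int:
  fixes F :: "(nat \<Rightarrow> bool) \<Rightarrow> real"
  assumes cong: "\<And>f g. (\<And>j. j < t \<Longrightarrow> f j = g j) \<Longrightarrow> F f = F g"
  shows "integrable M (\<lambda>w. F (\<lambda>j. x j w))"
proof -
  have "integrable M (\<lambda>w. (\<Sum>A\<in>Pow {..<t}. F (\<lambda>j. j \<in> A) * indicator (Wn t A) w))"
    by (intro Bochner_Integration.integrable_sum Bochner_Integration.integrable_mult_right) (simp add: emeasure_eq_measure)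
  then show ?thesis
    by (rule Bochner_Integration.integrable_cong[OF refl, THEN iffD2, rotated]) (rule prefix_repr[where t=t and F=F, OF cong])
qed

lemma prefix_indep:
  fixes F :: "(nat \<Rightarrow> bool) \<Rightarrow> real"
  assumes cong: "\<And>f g. (\<And>j. j < t \<Longrightarrow> f j = g j) \<Longrightarrow> F f = F g"
  shows "expectation (\<lambda>w. (if x t w then 1 else 0) * F (\<lambda>j. x j w)) = xi * expectation (\<lambda>w. F (\<lambda>j. x j w))"
proof -
  have "expectation (\<lambda>w. (if x t w then 1 else 0) * F (\<lambda>j. x j w))
      = expectation (\<lambda>w. \<Sum>A\<in>Pow {..<t}. F (\<lambda>j. j \<in> A) * indicator (Wn' t A) w)"
  proof (rule Bochner_Integration.integral_cong[OF refl])
    fix w assume w: "w \<in> space M"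
    have "(if x t w then 1 else 0) * F (\<lambda>j. x j w) = (if x t w then 1 else 0) * (\<Sum>A\<in>Pow {..<t}. F (\<lambda>j. j \<in> A) * indicator (Wn t A) w)"
      by (subst prefix_repr[where t=t and F=F, OF cong w]) simp_all
    also have "\<dots> = (\<Sum>A\<in>Pow {..<t}. F (\<lambda>j. j \<in> A) * ((if x t w then 1 else 0) * indicator (Wn t A) w))"
      by (subst sum_distrib_left) (rule sum.cong, simp_all only: ac_simps)
    also have "\<dots> = (\<Sum>A\<in>Pow {..<t}. F (\<lambda>j. j \<in> A) * indicator (Wn' t A) w)"
      by (rule sum.cong) (use w in \<open>auto simp: ind_Wn'\<close>)
    finally show "(if x t w then 1 else 0) * F (\<lambda>j. x j w) = (\<Sum>A\<in>Pow {..<t}. F (\<lambda>j. j \<in> A) * indicator (Wn' t A) w)" .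
  qed
  also have "\<dots> = (\<Sum>A\<in>Pow {..<t}. F (\<lambda>j. j \<in> A) * prob (Wn' t A))"
    by (subst Bochner_Integration.integral_sum) (auto simp: emeasure_eq_measure)
  also have "\<dots> = xi * (\<Sum>A\<in>Pow {..<t}. F (\<lambda>j. j \<in> A) * prob (Wn t A))"
    by (subst sum_distrib_left, rule sum.cong) (auto simp: prob_Wn')
  also have "(\<Sum>A\<in>Pow {..<t}. F (\<lambda>j. j \<in> A) * prob (Wn t A)) = expectation (\<lambda>w. \<Sum>A\<in>Pow {..<t}. F (\<lambda>j. j \<in> A) * indicator (Wn t A) w)"
    by (subst Bochner_Integration.integral_sum) (auto simp: emeasure_eq_measure)
  also have "\<dots> = expectation (\<lambda>w. F (\<lambda>j. x j w))"
    by (rule Bochner_Integration.integral_cong[OF refl]) (rule prefix_repr[OF cong, symmetric])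
  finally show ?thesis .
qed

end


context bern_seq
begin

definition DF :: "nat \<Rightarrow> (nat \<Rightarrow> bool) \<Rightarrow> real" where
  "DF s f = real_of_int (disc_aoi f s)"

definition Dv :: "nat \<Rightarrow> 'a \<Rightarrow> real" where
  "Dv s w = DF s (\<lambda>j. x j w)"

definition Xv :: "nat \<Rightarrow> 'a \<Rightarrow> real" where
  "Xv s w = (if x s w then 1 else 0)"

lemma DF_cong: "s \<le> t \<Longrightarrow> (\<And>j. j < t \<Longrightarrow> f j = g j) \<Longrightarrow> DF s f = DF s g"
  unfolding DF_def by (metis disc_aoi_cong order_less_le_trans)

lemma Dv_Suc: "Dv (Suc s) w = (if x s w then 2 else Dv s w + 1)"
  by (simp add: Dv_def DF_def disc_aoi_Suc)

lemma Dv_0: "Dv 0 w = 2"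
  by (simp add: Dv_def DF_def disc_aoi_0)

lemma Dv_ge: "Dv s w \<ge> 2"
  using disc_aoi_ge2[of "\<lambda>j. x j w" s] by (simp add: Dv_def DF_def)

lemma Dv_meas[measurable]: "Dv s \<in> borel_measurable M"
  unfolding Dv_def by (rule prefix_meas[where t=s]) (rule DF_cong, auto)

lemma Dv_int: "integrable M (\<lambda>w. a * Dv s w + b * (Dv s w)\<^sup>2 + c)"
  unfolding Dv_def
  by (rule prefix_int[where t=s and F="\<lambda>f. a * DF s f + b * (DF s f)\<^sup>2 + c"]) (metis DF_cong order_refl)

lemma prefix_split:
  fixes F :: "(nat \<Rightarrow> bool) \<Rightarrow> real"
  assumes cong: "\<And>f g. (\<And>j. j < t \<Longrightarrow> f j = g j) \<Longrightarrow> F f = F g"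
  shows "expectation (\<lambda>w. if x t w then a else F (\<lambda>j. x j w)) = xi * a + (1 - xi) * expectation (\<lambda>w. F (\<lambda>j. x j w))"
proof -
  have cong2: "\<And>f g. (\<And>j. j < t \<Longrightarrow> f j = g j) \<Longrightarrow> a - F f = a - F g" using cong by metis
  have cong3: "\<And>f g. (\<And>j. j < Suc t \<Longrightarrow> f j = g j) \<Longrightarrow> (if f t then 1 else 0) * (a - F f) = (if g t then 1 else 0) * (a - F g)"
    using cong by (metis less_Suc_eq)
  have i1: "integrable M (\<lambda>w. F (\<lambda>j. x j w))" by (rule prefix_int[OF cong])
  have i2: "integrable M (\<lambda>w. (if x t w then 1 else 0) * (a - F (\<lambda>j. x j w)))"
    by (rule prefix_int[where t="Suc t" and F="\<lambda>f. (if f t then 1 else 0) * (a - F f)", OF cong3])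
  have "expectation (\<lambda>w. if x t w then a else F (\<lambda>j. x j w))
      = expectation (\<lambda>w. F (\<lambda>j. x j w) + (if x t w then 1 else 0) * (a - F (\<lambda>j. x j w)))"
    by (rule Bochner_Integration.integral_cong) auto
  also have "\<dots> = expectation (\<lambda>w. F (\<lambda>j. x j w)) + expectation (\<lambda>w. (if x t w then 1 else 0) * (a - F (\<lambda>j. x j w)))"
    by (rule Bochner_Integration.integral_add[OF i1 i2])
  also have "expectation (\<lambda>w. (if x t w then 1 else 0) * (a - F (\<lambda>j. x j w))) = xi * expectation (\<lambda>w. a - F (\<lambda>j. x j w))"
    by (rule prefix_indep[where F="\<lambda>f. a - F f", OF cong2])
  also have "expectation (\<lambda>w. a - F (\<lambda>j. x j w)) = a - expectation (\<lambda>w. F (\<lambda>j. x j w))"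
    using i1 by (simp add: prob_space)
  finally show ?thesis by (simp add: algebra_simps)
qed

definition "m1 s = expectation (Dv s)"
definition "m2 s = expectation (\<lambda>w. (Dv s w)\<^sup>2)"

lemma m1_Suc: "m1 (Suc s) = xi * 2 + (1 - xi) * (m1 s + 1)"
proof -
  have eq: "Dv (Suc s) = (\<lambda>w. if x s w then 2 else DF s (\<lambda>j. x j w) + 1)"
    by (rule ext) (simp add: Dv_Suc Dv_def[of s])
  have "m1 (Suc s) = expectation (\<lambda>w. if x s w then 2 else DF s (\<lambda>j. x j w) + 1)"
    unfolding m1_def eq ..
  also have "\<dots> = xi * 2 + (1 - xi) * expectation (\<lambda>w. DF s (\<lambda>j. x j w) + 1)"
    by (rule prefix_split) (metis DF_cong order_refl)
  also have "expectation (\<lambda>w. DF s (\<lambda>j. x j w) + 1) = m1 s + 1"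
    using Dv_int[of 1 s 0 0] unfolding m1_def Dv_def by (simp add: prob_space)
  finally show ?thesis .
qed

lemma m2_Suc: "m2 (Suc s) = xi * 4 + (1 - xi) * (m2 s + 2 * m1 s + 1)"
proof -
  have eq: "(\<lambda>w. (Dv (Suc s) w)\<^sup>2) = (\<lambda>w. if x s w then 4 else (DF s (\<lambda>j. x j w) + 1)\<^sup>2)"
    by (rule ext) (simp add: Dv_Suc Dv_def[of s])
  have "m2 (Suc s) = expectation (\<lambda>w. if x s w then 4 else (DF s (\<lambda>j. x j w) + 1)\<^sup>2)"
    unfolding m2_def eq ..
  also have "\<dots> = xi * 4 + (1 - xi) * expectation (\<lambda>w. (DF s (\<lambda>j. x j w) + 1)\<^sup>2)"
    by (rule prefix_split) (metis DF_cong order_refl)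
  also have "expectation (\<lambda>w. (DF s (\<lambda>j. x j w) + 1)\<^sup>2) = expectation (\<lambda>w. 2 * Dv s w + 1 * (Dv s w)\<^sup>2 + 1)"
    by (rule Bochner_Integration.integral_cong) (auto simp: Dv_def power2_eq_square algebra_simps)
  also have "\<dots> = m2 s + 2 * m1 s + 1"
  proof -
    have ia: "integrable M (\<lambda>w. 2 * Dv s w + 1 * (Dv s w)\<^sup>2)" using Dv_int[of 2 s 1 0] by simp
    have ib: "integrable M (Dv s)" using Dv_int[of 1 s 0 0] by simp
    have ic: "integrable M (\<lambda>w. (Dv s w)\<^sup>2)" using Dv_int[of 0 s 1 0] by simp
    have "expectation (\<lambda>w. 2 * Dv s w + 1 * (Dv s w)\<^sup>2 + 1) = expectation (\<lambda>w. 2 * Dv s w + 1 * (Dv s w)\<^sup>2) + 1"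
      using ia by (simp add: prob_space)
    also have "expectation (\<lambda>w. 2 * Dv s w + 1 * (Dv s w)\<^sup>2) = 2 * m1 s + m2 s"
      using ib ic unfolding m1_def m2_def by simp
    finally show ?thesis by simp
  qed
  finally show ?thesis .
qed

definition "Abnd = 1 + 1 / xi"
definition "Bbnd = (2 * Abnd + 5) / xi"

lemma moments_bnd: "m1 s \<le> Abnd \<and> m2 s \<le> Bbnd"
proof (induction s)
  case 0
  have "Abnd \<ge> 2" unfolding Abnd_def using xi_pos xi_le by (simp add: field_simps)
  moreover have "Bbnd \<ge> 2 * Abnd + 5"
  proof -
    have "(2 * Abnd + 5) * xi \<le> 2 * Abnd + 5"
      using \<open>Abnd \<ge> 2\<close> xi_le xi_pos by (intro mult_left_le) auto
    then show ?thesis unfolding Bbnd_def using xi_pos by (simp add: le_divide_eq)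
  qed
  moreover have "Dv 0 = (\<lambda>_. 2)" by (rule ext) (simp add: Dv_0)
  ultimately show ?case by (simp add: m1_def m2_def Dv_0 prob_space)
next
  case (Suc s)
  have xa: "xi * Abnd = xi + 1" unfolding Abnd_def using xi_pos by (simp add: field_simps)
  have xb: "xi * Bbnd = 2 * Abnd + 5" unfolding Bbnd_def using xi_pos by simp
  have q: "0 \<le> 1 - xi" using xi_le by simp
  have "m1 (Suc s) \<le> xi * 2 + (1 - xi) * (Abnd + 1)"
    unfolding m1_Suc using Suc q by (intro add_left_mono mult_left_mono) auto
  also have "\<dots> = Abnd" using xa by (simp add: algebra_simps)
  finally have a: "m1 (Suc s) \<le> Abnd" .
  have "m2 (Suc s) \<le> xi * 4 + (1 - xi) * (Bbnd + 2 * Abnd + 1)"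
    unfolding m2_Suc using Suc q by (intro add_left_mono mult_left_mono) auto
  also have "\<dots> = Bbnd - 4 + 4 * xi - xi * (2 * Abnd + 1)"
    using xb by (simp add: algebra_simps)
  also have "\<dots> \<le> Bbnd"
  proof -
    have "0 \<le> Abnd" unfolding Abnd_def using xi_pos by simp
    then have "0 \<le> xi * (2 * Abnd + 1)" using xi_pos by simp
    then show ?thesis using xi_le by linarith
  qed
  finally show ?case using a by simp
qed

end


lemma aux_div:
  assumes "(K::real) > 0" "xi > 0" "xi * S = K*(1+xi) + W - D + 2"
  shows "S / K = ((1+xi) + W/K - D/K + 2*(1/K))/xi"
proof -
  have hS: "S = (K*(1+xi) + W - D + 2) / xi" using assms by (simp add: eq_divide_eq mult.commute)
  show ?thesis unfolding hS using assms(1,2) by (simp add: field_simps)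
qed

context bern_seq
begin

definition EF :: "nat \<Rightarrow> (nat \<Rightarrow> bool) \<Rightarrow> real" where
  "EF s f = ((if f s then 1 else 0) - xi) * (1 - DF s f)"

definition eps :: "nat \<Rightarrow> 'a \<Rightarrow> real" where
  "eps s w = EF s (\<lambda>j. x j w)"

lemma EF_cong: "s < t \<Longrightarrow> (\<And>j. j < t \<Longrightarrow> f j = g j) \<Longrightarrow> EF s f = EF s g"
  unfolding EF_def using DF_cong[of s t f g] by simp

lemma eps_eq: "eps s w = (Xv s w - xi) * (1 - Dv s w)"
  by (simp add: eps_def EF_def Xv_def Dv_def)

lemma eps_meas[measurable]: "eps s \<in> borel_measurable M"
  unfolding eps_def by (rule prefix_meas[where t="Suc s"]) (rule EF_cong, auto)

lemma eps_prod_int: "integrable M (\<lambda>w. eps s w * eps t w)"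
  unfolding eps_def
proof (rule prefix_int[where t="Suc (max s t)" and F="\<lambda>f. EF s f * EF t f"])
  fix f g :: "nat \<Rightarrow> bool" assume h: "\<And>j. j < Suc (max s t) \<Longrightarrow> f j = g j"
  have "EF s f = EF s g" by (rule EF_cong[where t="Suc (max s t)", OF _ h]) simp
  moreover have "EF t f = EF t g" by (rule EF_cong[where t="Suc (max s t)", OF _ h]) simp
  ultimately show "EF s f * EF t f = EF s g * EF t g" by simp
qed

lemma eps_orth:
  assumes "s < t"
  shows "expectation (\<lambda>w. eps s w * eps t w) = 0"
proof -
  let ?G = "\<lambda>f. EF s f * (1 - DF t f)"
  have cG: "?G f = ?G g" if h: "\<And>j. j < t \<Longrightarrow> f j = g j" for f g
  proof -
    have "EF s f = EF s g" by (rule EF_cong[OF assms h])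
    moreover have "DF t f = DF t g" by (rule DF_cong[OF order_refl h])
    ultimately show ?thesis by simp
  qed
  have cG2: "(if f t then 1 else 0) * ?G f = (if g t then 1 else 0) * ?G g" if h: "\<And>j. j < Suc t \<Longrightarrow> f j = g j" for f g
  proof -
    have "?G f = ?G g" by (rule cG) (simp add: h)
    moreover have "f t = g t" by (simp add: h)
    ultimately show ?thesis by simp
  qed
  have i1: "integrable M (\<lambda>w. ?G (\<lambda>j. x j w))" by (rule prefix_int[OF cG])
  have i2: "integrable M (\<lambda>w. (if x t w then 1 else 0) * ?G (\<lambda>j. x j w))"
    by (rule prefix_int[where t="Suc t", OF cG2])
  have "expectation (\<lambda>w. eps s w * eps t w) = expectation (\<lambda>w. (if x t w then 1 else 0) * ?G (\<lambda>j. x j w) - xi * ?G (\<lambda>j. x j w))"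
  proof (rule Bochner_Integration.integral_cong[OF refl])
    fix w
    show "eps s w * eps t w = (if x t w then 1 else 0) * ?G (\<lambda>j. x j w) - xi * ?G (\<lambda>j. x j w)"
      unfolding eps_def[of t] EF_def[of t] eps_def[of s] by (simp add: algebra_simps)
  qed
  also have "\<dots> = expectation (\<lambda>w. (if x t w then 1 else 0) * ?G (\<lambda>j. x j w)) - expectation (\<lambda>w. xi * ?G (\<lambda>j. x j w))"
    using i1 i2 by (rule_tac Bochner_Integration.integral_diff) auto
  also have "\<dots> = 0"
    using prefix_indep[where t=t and F="?G", OF cG] by simp
  finally show ?thesis .
qed

lemma eps_sq: "expectation (\<lambda>w. eps s w * eps s w) \<le> Bbnd"
proof -
  have "expectation (\<lambda>w. eps s w * eps s w) \<le> expectation (\<lambda>w. (Dv s w)\<^sup>2)"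
  proof (rule integral_mono)
    show "integrable M (\<lambda>w. eps s w * eps s w)" by (rule eps_prod_int)
    show "integrable M (\<lambda>w. (Dv s w)\<^sup>2)" using Dv_int[of 0 s 1 0] by simp
    fix w
    have d: "Dv s w \<ge> 2" by (rule Dv_ge)
    have a: "\<bar>Xv s w - xi\<bar> \<le> 1" using xi_pos xi_le by (auto simp: Xv_def)
    have "(Xv s w - xi)\<^sup>2 \<le> 1" using a by (simp only: abs_square_le_1)
    moreover have "(1 - Dv s w)\<^sup>2 \<le> (Dv s w)\<^sup>2" using d by (simp add: power2_eq_square algebra_simps)
    moreover have "0 \<le> (1 - Dv s w)\<^sup>2" by simp
    ultimately have "(Xv s w - xi)\<^sup>2 * (1 - Dv s w)\<^sup>2 \<le> 1 * (Dv s w)\<^sup>2"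
      by (intro mult_mono) auto
    then show "eps s w * eps s w \<le> (Dv s w)\<^sup>2"
      by (simp add: eps_eq power2_eq_square algebra_simps)
  qed
  also have "\<dots> \<le> Bbnd" using moments_bnd[of s] by (simp add: m2_def)
  finally show ?thesis .
qed

definition "Wm N w = (\<Sum>s<N. eps s w)"

lemma Wm_meas[measurable]: "Wm N \<in> borel_measurable M"
  unfolding Wm_def by measurable

lemma Wm_sq: "(Wm N w)\<^sup>2 = (\<Sum>s<N. \<Sum>t<N. eps s w * eps t w)"
  unfolding Wm_def by (simp add: power2_eq_square sum_product)

lemma Wm_int: "integrable M (\<lambda>w. (Wm N w)\<^sup>2)"
  unfolding Wm_sq by (intro Bochner_Integration.integrable_sum eps_prod_int)

lemma Bbnd_nn: "0 \<le> Bbnd"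
  using moments_bnd[of 0] by (simp add: m2_def Dv_0 prob_space)

lemma Wm_var: "expectation (\<lambda>w. (Wm N w)\<^sup>2) \<le> Bbnd * (real N + 1)"
proof -
  have "expectation (\<lambda>w. (Wm N w)\<^sup>2) = (\<Sum>s<N. \<Sum>t<N. expectation (\<lambda>w. eps s w * eps t w))"
    unfolding Wm_sq by (simp add: Bochner_Integration.integral_sum eps_prod_int)
  also have "\<dots> = (\<Sum>s<N. expectation (\<lambda>w. eps s w * eps s w))"
  proof (rule sum.cong[OF refl])
    fix s assume s: "s \<in> {..<N}"
    have "(\<Sum>t<N. expectation (\<lambda>w. eps s w * eps t w)) = (\<Sum>t<N. if t = s then expectation (\<lambda>w. eps s w * eps s w) else 0)"
    proof (rule sum.cong[OF refl])
      fix t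
      show "expectation (\<lambda>w. eps s w * eps t w) = (if t = s then expectation (\<lambda>w. eps s w * eps s w) else 0)"
      proof (cases "t = s")
        case False
        then show ?thesis
          using eps_orth[of s t] eps_orth[of t s] by (cases "s < t") (auto simp: mult.commute)
      qed simp
    qed
    also have "\<dots> = expectation (\<lambda>w. eps s w * eps s w)" using s by simp
    finally show "(\<Sum>t<N. expectation (\<lambda>w. eps s w * eps t w)) = expectation (\<lambda>w. eps s w * eps s w)" .
  qed
  also have "\<dots> \<le> (\<Sum>s<N. Bbnd)" by (intro sum_mono eps_sq)
  also have "\<dots> \<le> Bbnd * (real N + 1)" using Bbnd_nn by (simp add: algebra_simps)
  finally show ?thesis .
qed

lemma D_identity: "xi * (\<Sum>s<N. Dv s w) = real N * (1 + xi) + Wm N w - Dv N w + 2"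
proof (induction N)
  case 0 then show ?case by (simp add: Wm_def Dv_0)
next
  case (Suc N)
  have "Dv (Suc N) w = (1 - xi) * Dv N w + 1 + xi + eps N w"
    by (simp add: Dv_Suc eps_eq Xv_def algebra_simps)
  then show ?case using Suc by (simp add: Wm_def algebra_simps)
qed

lemma aoi_sum_slln: "AE w in M. (\<lambda>N. (\<Sum>s<N. Dv s w) / real N) \<longlonglongrightarrow> 1 + 1 / xi"
proof -
  have AE1: "AE w in M. (\<lambda>k. Wm ((Suc k)\<^sup>2) w / real ((Suc k)\<^sup>2)) \<longlonglongrightarrow> 0"
    by (rule cheb_subseq[where C=Bbnd]) (auto intro: Wm_int Wm_var)
  have AE2: "AE w in M. (\<lambda>k. Dv ((Suc k)\<^sup>2) w / real ((Suc k)\<^sup>2)) \<longlonglongrightarrow> 0"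
  proof (rule cheb_subseq[where C=Bbnd])
    show "integrable M (\<lambda>w. (Dv N w)\<^sup>2)" for N using Dv_int[of 0 N 1 0] by simp
    show "expectation (\<lambda>w. (Dv N w)\<^sup>2) \<le> Bbnd * (real N + 1)" for N
    proof -
      have "expectation (\<lambda>w. (Dv N w)\<^sup>2) \<le> Bbnd" using moments_bnd[of N] by (simp add: m2_def)
      also have "\<dots> \<le> Bbnd * (real N + 1)" using Bbnd_nn by (simp add: algebra_simps)
      finally show ?thesis .
    qed
  qed simp
  have sq: "(\<lambda>k. 1 / real ((Suc k)\<^sup>2)) \<longlonglongrightarrow> 0"
  proof -
    have "(\<lambda>k. inverse (real (Suc k)) * inverse (real (Suc k))) \<longlonglongrightarrow> 0 * 0"
      by (intro tendsto_mult LIMSEQ_inverse_real_of_nat)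
    then show ?thesis by (simp only: of_nat_power of_nat_mult power2_eq_square divide_inverse mult_1_left inverse_mult_distrib mult_zero_left)
  qed
  show ?thesis
  proof (rule AE_mp[OF AE_conjI[OF AE1 AE2] AE_I2], intro impI, elim conjE)
    fix w assume w: "w \<in> space M"
      and h1: "(\<lambda>k. Wm ((Suc k)\<^sup>2) w / real ((Suc k)\<^sup>2)) \<longlonglongrightarrow> 0"
      and h2: "(\<lambda>k. Dv ((Suc k)\<^sup>2) w / real ((Suc k)\<^sup>2)) \<longlonglongrightarrow> 0"
    have lim: "(\<lambda>k. ((1 + xi) + Wm ((Suc k)\<^sup>2) w / real ((Suc k)\<^sup>2) - Dv ((Suc k)\<^sup>2) w / real ((Suc k)\<^sup>2)
          + 2 * (1 / real ((Suc k)\<^sup>2))) / xi) \<longlonglongrightarrow> ((1 + xi) + 0 - 0 + 2 * 0) / xi"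
      by (intro tendsto_intros h1 h2 sq) (use xi_pos in simp)
    have "(\<lambda>k. (\<Sum>s<(Suc k)\<^sup>2. Dv s w) / real ((Suc k)\<^sup>2)) \<longlonglongrightarrow> 1 + 1 / xi"
    proof -
      have "(\<Sum>s<(Suc k)\<^sup>2. Dv s w) / real ((Suc k)\<^sup>2) = ((1 + xi) + Wm ((Suc k)\<^sup>2) w / real ((Suc k)\<^sup>2) - Dv ((Suc k)\<^sup>2) w / real ((Suc k)\<^sup>2)
          + 2 * (1 / real ((Suc k)\<^sup>2))) / xi" for k
        by (rule aux_div) (use xi_pos D_identity[where N="(Suc k)\<^sup>2" and w=w] in auto)
      moreover have "((1 + xi) + 0 - 0 + 2 * 0) / xi = 1 + 1 / xi" using xi_pos by (simp add: field_simps)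
      ultimately show ?thesis using lim by simp
    qed
    then show "(\<lambda>N. (\<Sum>s<N. Dv s w) / real N) \<longlonglongrightarrow> 1 + 1 / xi"
    proof (rule interp_sq[rotated 2])
      show "(\<Sum>s<m. Dv s w) \<le> (\<Sum>s<n. Dv s w)" if "m \<le> n" for m n
        by (rule sum_mono2) (use that Dv_ge[of _ w] in \<open>auto intro: order_trans[of 0 2]\<close>)
      show "0 \<le> (\<Sum>s<n. Dv s w)" for n
        by (rule sum_nonneg) (use Dv_ge[of _ w] in \<open>auto intro: order_trans[of 0 2]\<close>)
    qed
  qed
qed

end


lemma last_succ_le: "last_succ f s \<le> int s - 1"
  by (induction s) (auto simp: last_succ_0 last_succ_Suc)

lemma nat_floor_eq: "real s \<le> r \<Longrightarrow> r < real s + 1 \<Longrightarrow> nat \<lfloor>r\<rfloor> = s"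
  by linarith

lemma aoi_slot: "real s \<le> r \<Longrightarrow> r < real s + 1 \<Longrightarrow> aoi f r = r - real_of_int (last_succ f s)"
  by (simp add: aoi_def nat_floor_eq)

lemma aoi_ge1: "0 \<le> r \<Longrightarrow> aoi f r \<ge> 1"
proof -
  assume r: "0 \<le> r"
  define s where "s = nat \<lfloor>r\<rfloor>"
  have "real s \<le> r" unfolding s_def using r by linarith
  moreover have "last_succ f s \<le> int s - 1" by (rule last_succ_le)
  ultimately show ?thesis unfolding aoi_def s_def[symmetric] by linarith
qed

lemma disc_L: "real_of_int (last_succ f s) = real s + 1 - real_of_int (disc_aoi f s)"
  by (simp add: disc_aoi_def)

lemma slots_has_integral:
  fixes g :: "real \<Rightarrow> real"
  assumes "\<And>s. (g has_integral a s) {real s..real (Suc s)}"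
  shows "(g has_integral (\<Sum>s<N. a s)) {0..real N}"
proof (induction N)
  case 0 then show ?case by (auto intro: has_integral_null_real)
next
  case (Suc N)
  have "(g has_integral (\<Sum>s<N. a s) + a N) {0..real (Suc N)}"
    by (rule has_integral_combine[OF _ _ Suc assms]) auto
  then show ?case by (simp add: add.commute)
qed

lemma aoi_slot_integral:
  "(aoi f has_integral (real_of_int (disc_aoi f s) - 1/2)) {real s..real (Suc s)}"
proof -
  let ?L = "real_of_int (last_succ f s)"
  have "((\<lambda>r. r - ?L) has_integral ((real (Suc s))\<^sup>2 - (real s)\<^sup>2)/2 - measure lborel {real s..real (Suc s)} *\<^sub>R ?L) {real s..real (Suc s)}"
    by (intro has_integral_diff ident_has_integral has_integral_const_real) simp
  moreover have "((real (Suc s))\<^sup>2 - (real s)\<^sup>2)/2 - measure lborel {real s..real (Suc s)} *\<^sub>R ?L = real_of_int (disc_aoi f s) - 1/2"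
    by (simp add: disc_L power2_eq_square algebra_simps)
  ultimately have h: "((\<lambda>r. r - ?L) has_integral (real_of_int (disc_aoi f s) - 1/2)) {real s..real (Suc s)}"
    by simp
  show ?thesis
    by (rule has_integral_spike_finite[where S="{real (Suc s)}", OF _ _ h]) (auto simp: aoi_slot)
qed

lemma aoi_int_N: "(aoi f has_integral (\<Sum>s<N. real_of_int (disc_aoi f s) - 1/2)) {0..real N}"
  by (rule slots_has_integral[OF aoi_slot_integral])

lemma viol_slot_integral:
  "((\<lambda>r. if aoi f r > real \<theta> then 1 else 0) has_integral (if disc_aoi f s \<ge> int \<theta> + 1 then 1 else 0 :: real)) {real s..real (Suc s)}"
proof -
  have h: "((\<lambda>r. (if disc_aoi f s \<ge> int \<theta> + 1 then 1 else 0 :: real)) has_integral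
      measure lborel {real s..real (Suc s)} *\<^sub>R (if disc_aoi f s \<ge> int \<theta> + 1 then 1 else 0 :: real)) {real s..real (Suc s)}"
    by (rule has_integral_const_real)
  have "measure lborel {real s..real (Suc s)} = 1" by simp
  then have h2: "((\<lambda>r. (if disc_aoi f s \<ge> int \<theta> + 1 then 1 else 0 :: real)) has_integral
      (if disc_aoi f s \<ge> int \<theta> + 1 then 1 else 0 :: real)) {real s..real (Suc s)}"
    using h by (simp only: scaleR_one)
  show ?thesis
  proof (rule has_integral_spike_finite[where S="{real s, real (Suc s)}", OF _ _ h2])
    fix r assume r: "r \<in> {real s..real (Suc s)} - {real s, real (Suc s)}"
    then have r1: "real s < r" "r < real s + 1" by auto
    then have a: "aoi f r = r - (real s + 1 - real_of_int (disc_aoi f s))"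
      using aoi_slot[of s r f] disc_L[of f s] by simp
    show "(if aoi f r > real \<theta> then 1 else 0) = (if disc_aoi f s \<ge> int \<theta> + 1 then 1 else 0 :: real)"
    proof (cases "disc_aoi f s \<ge> int \<theta> + 1")
      case True
      then have "real_of_int (disc_aoi f s) \<ge> real \<theta> + 1" by linarith
      then show ?thesis using True a r1 by auto
    next
      case False
      then have "real_of_int (disc_aoi f s) \<le> real \<theta>" by linarith
      then show ?thesis using False a r1 by auto
    qed
  qed simp
qed

lemma aoi_meas[measurable]: "aoi f \<in> borel_measurable borel"
  unfolding aoi_def by measurable

lemma viol_meas_N:
  "measure lborel {r\<in>{0..real N}. aoi f r > real \<theta>} = real (card {s\<in>{..<N}. disc_aoi f s \<ge> int \<theta> + 1})"
proof -
  let ?S = "{r\<in>{0..real N}. aoi f r > real \<theta>}"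
  have "((\<lambda>r. if aoi f r > real \<theta> then 1 else 0) has_integral (\<Sum>s<N. if disc_aoi f s \<ge> int \<theta> + 1 then 1 else 0 :: real)) {0..real N}"
    by (rule slots_has_integral[OF viol_slot_integral])
  also have "(\<Sum>s<N. if disc_aoi f s \<ge> int \<theta> + 1 then 1 else 0 :: real) = real (card {s\<in>{..<N}. disc_aoi f s \<ge> int \<theta> + 1})"
    by (rule sum_if_card)
  finally have h: "((\<lambda>r. if aoi f r > real \<theta> then 1 else 0) has_integral real (card {s\<in>{..<N}. disc_aoi f s \<ge> int \<theta> + 1})) {0..real N}" .
  have "((\<lambda>r. if r \<in> ?S then 1 else 0) has_integral real (card {s\<in>{..<N}. disc_aoi f s \<ge> int \<theta> + 1})) {0..real N}"
    by (rule has_integral_spike_finite[where S="{}", OF _ _ h]) auto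
  then have "((\<lambda>r. 1) has_integral real (card {s\<in>{..<N}. disc_aoi f s \<ge> int \<theta> + 1})) ?S"
    by (subst (asm) has_integral_restrict) auto
  moreover have "?S \<in> sets borel" by measurable
  ultimately have "emeasure lborel ?S = ennreal (real (card {s\<in>{..<N}. disc_aoi f s \<ge> int \<theta> + 1}))"
    by (subst (asm) has_integral_iff_emeasure_lborel) auto
  then show ?thesis by (simp add: measure_def)
qed


lemma rt_interp:
  fixes F :: "real \<Rightarrow> real"
  assumes mono: "\<And>a b. 0 \<le> a \<Longrightarrow> a \<le> b \<Longrightarrow> F a \<le> F b"
    and nn: "\<And>n. 0 \<le> F (real n)"
    and lim: "(\<lambda>N. F (real N) / real N) \<longlonglongrightarrow> c"
  shows "((\<lambda>t. F t / t) \<longlongrightarrow> c) at_top"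
proof -
  define u where "u N = F (real N) / real (Suc N)" for N
  define v where "v N = F (real (Suc N)) / real N" for N
  have u: "u \<longlonglongrightarrow> c"
  proof -
    have "(\<lambda>N. F (real N) / real N * (real N / real (Suc N))) \<longlonglongrightarrow> c * 1"
      by (intro tendsto_mult lim LIMSEQ_n_over_Suc_n)
    moreover have "eventually (\<lambda>N. F (real N) / real N * (real N / real (Suc N)) = u N) sequentially"
      unfolding eventually_sequentially u_def by (rule exI[of _ 1]) auto
    ultimately show ?thesis by (auto intro: Lim_transform_eventually)
  qed
  have v: "v \<longlonglongrightarrow> c"
  proof -
    have "(\<lambda>N. F (real (Suc N)) / real (Suc N) * (real (Suc N) / real N)) \<longlonglongrightarrow> c * 1"
      by (intro tendsto_mult LIMSEQ_Suc[OF lim] LIMSEQ_Suc_n_over_n)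
    moreover have "eventually (\<lambda>N. F (real (Suc N)) / real (Suc N) * (real (Suc N) / real N) = v N) sequentially"
      unfolding eventually_sequentially v_def by (rule exI[of _ 1]) auto
    ultimately show ?thesis by (auto intro: Lim_transform_eventually)
  qed
  have nf: "filterlim (\<lambda>t::real. nat \<lfloor>t\<rfloor>) sequentially at_top"
    by (rule filterlim_compose[OF filterlim_nat_sequentially filterlim_floor_sequentially])
  have lu: "((\<lambda>t::real. u (nat \<lfloor>t\<rfloor>)) \<longlongrightarrow> c) at_top" using filterlim_compose[OF u nf] by simp
  have lv: "((\<lambda>t::real. v (nat \<lfloor>t\<rfloor>)) \<longlongrightarrow> c) at_top" using filterlim_compose[OF v nf] by simp
  show ?thesis
  proof (rule tendsto_sandwich[OF _ _ lu lv])
    show "eventually (\<lambda>t. u (nat \<lfloor>t\<rfloor>) \<le> F t / t) at_top"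
      unfolding eventually_at_top_linorder
    proof (intro exI[of _ 1] allI impI)
      fix t :: real assume t: "1 \<le> t"
      define n where "n = nat \<lfloor>t\<rfloor>"
      have n1: "real n \<le> t" "t < real n + 1" "1 \<le> n" unfolding n_def using t by linarith+
      have "u n = F (real n) / real (Suc n)" by (simp add: u_def)
      also have "\<dots> \<le> F (real n) / t"
        by (rule divide_left_mono) (use nn n1 t in auto)
      also have "\<dots> \<le> F t / t"
        by (rule divide_right_mono[OF mono]) (use n1 t in auto)
      finally show "u (nat \<lfloor>t\<rfloor>) \<le> F t / t" unfolding n_def .
    qed
    show "eventually (\<lambda>t. F t / t \<le> v (nat \<lfloor>t\<rfloor>)) at_top"
      unfolding eventually_at_top_linorder
    proof (intro exI[of _ 1] allI impI)
      fix t :: real assume t: "1 \<le> t"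
      define n where "n = nat \<lfloor>t\<rfloor>"
      have n1: "real n \<le> t" "t < real n + 1" "1 \<le> n" unfolding n_def using t by linarith+
      have "F t / t \<le> F (real (Suc n)) / t"
        by (rule divide_right_mono[OF mono]) (use n1 t in auto)
      also have "\<dots> \<le> F (real (Suc n)) / real n"
        by (rule divide_left_mono) (use nn[of "Suc n"] n1 t in auto)
      also have "\<dots> = v n" by (simp add: v_def)
      finally show "F t / t \<le> v (nat \<lfloor>t\<rfloor>)" unfolding n_def .
    qed
  qed
qed

lemma aoi_integrable: "0 \<le> b \<Longrightarrow> aoi f integrable_on {0..b}"
proof -
  assume b: "0 \<le> b"
  define N where "N = nat \<lceil>b\<rceil>"
  have "aoi f integrable_on {0..real N}" using aoi_int_N by blast
  moreover have "{0..b} \<subseteq> {0..real N}" unfolding N_def by auto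
  ultimately show ?thesis by (rule integrable_subinterval_real)
qed

lemma aoi_int_mono: "0 \<le> a \<Longrightarrow> a \<le> b \<Longrightarrow> integral {0..a} (aoi f) \<le> integral {0..b} (aoi f)"
proof -
  assume a: "0 \<le> a" and ab: "a \<le> b"
  have ib: "aoi f integrable_on {0..b}" using a ab by (intro aoi_integrable) auto
  have i1: "aoi f integrable_on {0..a}" by (rule integrable_subinterval_real[OF ib]) (use ab in auto)
  have i2: "aoi f integrable_on {a..b}" by (rule integrable_subinterval_real[OF ib]) (use a in auto)
  have "integral {0..b} (aoi f) = integral {0..a} (aoi f) + integral {a..b} (aoi f)"
    by (rule Henstock_Kurzweil_Integration.integral_combine[symmetric]) (use a ab ib in auto)
  moreover have "0 \<le> integral {a..b} (aoi f)"
    by (rule integral_nonneg[OF i2]) (use a aoi_ge1 in \<open>auto intro: order_trans[of 0 1]\<close>)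
  ultimately show ?thesis by simp
qed

lemma aoi_time_avg:
  assumes "(\<lambda>N. (\<Sum>s<N. real_of_int (disc_aoi f s)) / real N) \<longlonglongrightarrow> c"
  shows "((\<lambda>t. integral {0..t} (aoi f) / t) \<longlongrightarrow> c - 1/2) at_top"
proof (rule rt_interp)
  show "integral {0..a} (aoi f) \<le> integral {0..b} (aoi f)" if "0 \<le> a" "a \<le> b" for a b
    using aoi_int_mono that by blast
  have iN: "integral {0..real N} (aoi f) = (\<Sum>s<N. real_of_int (disc_aoi f s)) - real N / 2" for N
    using aoi_int_N[of f N] by (simp add: integral_unique sum_subtractf)
  show "0 \<le> integral {0..real n} (aoi f)" for n
    using aoi_int_mono[of 0 "real n" f] by simp
  have "(\<lambda>N. (\<Sum>s<N. real_of_int (disc_aoi f s)) / real N - 1/2) \<longlonglongrightarrow> c - 1/2"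
    by (intro tendsto_intros assms)
  moreover have "eventually (\<lambda>N. (\<Sum>s<N. real_of_int (disc_aoi f s)) / real N - 1/2 = integral {0..real N} (aoi f) / real N) sequentially"
    unfolding eventually_sequentially iN by (rule exI[of _ 1]) (auto simp: field_simps)
  ultimately show "(\<lambda>N. integral {0..real N} (aoi f) / real N) \<longlonglongrightarrow> c - 1/2"
    by (rule Lim_transform_eventually)
qed

lemma viol_set_meas[measurable]: "{r\<in>{0..t}. aoi f r > real \<theta>} \<in> sets borel"
  by measurable

lemma viol_mono: "0 \<le> a \<Longrightarrow> a \<le> b \<Longrightarrow> measure lborel {r\<in>{0..a}. aoi f r > real \<theta>} \<le> measure lborel {r\<in>{0..b}. aoi f r > real \<theta>}"
proof -
  assume "0 \<le> a" "a \<le> b"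
  have "emeasure lborel {r\<in>{0..b}. aoi f r > real \<theta>} \<le> emeasure lborel {0..b}"
    by (rule emeasure_mono) auto
  also have "emeasure lborel {0..b} = ennreal b" using \<open>0 \<le> a\<close> \<open>a \<le> b\<close> by simp
  also have "ennreal b < \<infinity>" by simp
  finally have fin: "emeasure lborel {r\<in>{0..b}. aoi f r > real \<theta>} < \<infinity>" .
  show ?thesis
    by (rule measure_mono_fmeasurable) (use \<open>a \<le> b\<close> fin in \<open>auto simp: fmeasurable_def\<close>)
qed

lemma viol_time_avg:
  assumes "(\<lambda>N. real (card {s\<in>{..<N}. disc_aoi f s \<ge> int \<theta> + 1}) / real N) \<longlonglongrightarrow> c"
  shows "((\<lambda>t. measure lborel {r\<in>{0..t}. aoi f r > real \<theta>} / t) \<longlongrightarrow> c) at_top"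
proof (rule rt_interp)
  show "measure lborel {r\<in>{0..a}. aoi f r > real \<theta>} \<le> measure lborel {r\<in>{0..b}. aoi f r > real \<theta>}" if "0 \<le> a" "a \<le> b" for a b
    using viol_mono that by blast
  show "0 \<le> measure lborel {r\<in>{0..real n}. aoi f r > real \<theta>}" for n by simp
  show "(\<lambda>N. measure lborel {r\<in>{0..real N}. aoi f r > real \<theta>} / real N) \<longlonglongrightarrow> c"
    using assms by (simp only: viol_meas_N)
qed


lemma last_succ_enum:
  assumes S: "infinite {s. f s}"
  shows "last_succ f (enumerate {s. f s} (Suc i)) = int (enumerate {s. f s} i)"
proof -
  let ?e = "enumerate {s. f s}"
  have lt: "?e i < ?e (Suc i)" by (rule enumerate_step[OF S])
  have fi: "f (?e i)" using enumerate_in_set[OF S, of i] by simp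
  have g: "(GREATEST k. k < ?e (Suc i) \<and> f k) = ?e i"
  proof (rule Greatest_equality)
    show "?e i < ?e (Suc i) \<and> f (?e i)" using lt fi by simp
    fix y assume y: "y < ?e (Suc i) \<and> f y"
    then obtain m where m: "?e m = y" using enumerate_Ex[OF S, of y] by auto
    then have "m < Suc i" using y enumerate_mono_iff[OF S, of m "Suc i"] by simp
    then show "y \<le> ?e i" using m enumerate_mono_le_iff[OF S, of m i] by simp
  qed
  show ?thesis unfolding last_succ_def using lt fi g by auto
qed

lemma peak_disc:
  assumes S: "infinite {s. f s}"
  shows "peak_aoi f (Suc i) = disc_aoi f (succ_slot f (Suc i))"
  unfolding peak_aoi_def disc_aoi_def succ_slot_def using last_succ_enum[OF S, of i] by simp

lemma below_enum:
  assumes S: "infinite {s. f s}"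
  shows "{s\<in>{..<Suc (enumerate {s. f s} n)}. f s} = enumerate {s. f s} ` {..n}"
proof
  let ?e = "enumerate {s. f s}"
  show "{s\<in>{..<Suc (?e n)}. f s} \<subseteq> ?e ` {..n}"
  proof
    fix s assume s: "s \<in> {s\<in>{..<Suc (?e n)}. f s}"
    then obtain m where m: "?e m = s" using enumerate_Ex[OF S, of s] by auto
    then have "m \<le> n" using s enumerate_mono_le_iff[OF S, of m n] by simp
    then show "s \<in> ?e ` {..n}" using m by auto
  qed
  show "?e ` {..n} \<subseteq> {s\<in>{..<Suc (?e n)}. f s}"
  proof
    fix s assume "s \<in> ?e ` {..n}"
    then obtain m where m: "m \<le> n" "s = ?e m" by auto
    then have "?e m \<le> ?e n" using enumerate_mono_le_iff[OF S] by simp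
    then show "s \<in> {s\<in>{..<Suc (?e n)}. f s}" using m enumerate_in_set[OF S, of m] by auto
  qed
qed

lemma card_below_enum:
  assumes S: "infinite {s. f s}"
  shows "card {s\<in>{..<Suc (enumerate {s. f s} n)}. f s} = Suc n"
  unfolding below_enum[OF S] by (subst card_image) (auto intro: inj_on_subset[OF inj_enumerate[OF S]])

lemma peak_count:
  assumes S: "infinite {s. f s}"
  shows "card {k\<in>{1..n}. peak_aoi f k = int \<delta>} =
     card {s\<in>{..<Suc (succ_slot f n)}. f s \<and> disc_aoi f s = int \<delta>} - card {s\<in>{..<Suc (succ_slot f 0)}. f s \<and> disc_aoi f s = int \<delta>}"
proof -
  let ?e = "enumerate {s. f s}"
  let ?P = "\<lambda>s. f s \<and> disc_aoi f s = int \<delta>"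
  have inj: "inj ?e" by (rule inj_enumerate[OF S])
  have img: "?e ` {k\<in>{1..n}. peak_aoi f k = int \<delta>} = {s\<in>{..<Suc (?e n)}. ?P s} - {s\<in>{..<Suc (?e 0)}. ?P s}"
  proof
    show "?e ` {k\<in>{1..n}. peak_aoi f k = int \<delta>} \<subseteq> {s\<in>{..<Suc (?e n)}. ?P s} - {s\<in>{..<Suc (?e 0)}. ?P s}"
    proof
      fix s assume "s \<in> ?e ` {k\<in>{1..n}. peak_aoi f k = int \<delta>}"
      then obtain k where k: "k \<in> {1..n}" "peak_aoi f k = int \<delta>" "s = ?e k" by auto
      then obtain i where i: "k = Suc i" by (cases k) auto
      have "f s" using k enumerate_in_set[OF S] by auto
      moreover have "disc_aoi f s = int \<delta>" using peak_disc[OF S, of i] k i by (simp add: succ_slot_def)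
      moreover have "s \<le> ?e n" using k enumerate_mono_le_iff[OF S] by auto
      moreover have "?e 0 < s" using k i enumerate_mono_iff[OF S, of 0 k] by auto
      ultimately show "s \<in> {s\<in>{..<Suc (?e n)}. ?P s} - {s\<in>{..<Suc (?e 0)}. ?P s}" by auto
    qed
    show "{s\<in>{..<Suc (?e n)}. ?P s} - {s\<in>{..<Suc (?e 0)}. ?P s} \<subseteq> ?e ` {k\<in>{1..n}. peak_aoi f k = int \<delta>}"
    proof
      fix s assume s: "s \<in> {s\<in>{..<Suc (?e n)}. ?P s} - {s\<in>{..<Suc (?e 0)}. ?P s}"
      then obtain m where m: "?e m = s" using enumerate_Ex[OF S, of s] by auto
      have "m \<le> n" using s m enumerate_mono_le_iff[OF S, of m n] by auto
      moreover have "0 < m" using s m enumerate_mono_le_iff[OF S, of m 0] by (cases m) auto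
      moreover have "peak_aoi f m = int \<delta>"
      proof -
        obtain i where i: "m = Suc i" using \<open>0 < m\<close> by (cases m) auto
        show ?thesis using peak_disc[OF S, of i] s m i by (simp add: succ_slot_def)
      qed
      ultimately show "s \<in> ?e ` {k\<in>{1..n}. peak_aoi f k = int \<delta>}" using m by force
    qed
  qed
  have "card {k\<in>{1..n}. peak_aoi f k = int \<delta>} = card (?e ` {k\<in>{1..n}. peak_aoi f k = int \<delta>})"
    by (rule card_image[symmetric]) (rule inj_on_subset[OF inj], simp)
  also have "\<dots> = card ({s\<in>{..<Suc (?e n)}. ?P s} - {s\<in>{..<Suc (?e 0)}. ?P s})" unfolding img ..
  also have "\<dots> = card {s\<in>{..<Suc (?e n)}. ?P s} - card {s\<in>{..<Suc (?e 0)}. ?P s}"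
  proof (rule card_Diff_subset)
    show "{s\<in>{..<Suc (?e 0)}. ?P s} \<subseteq> {s\<in>{..<Suc (?e n)}. ?P s}"
      using enumerate_mono_le_iff[OF S, of 0 n] by auto
  qed simp
  finally show ?thesis unfolding succ_slot_def .
qed


lemma peak_limit:
  fixes f :: "nat \<Rightarrow> bool" and xi p :: real
  assumes xi: "xi > 0"
    and A: "(\<lambda>N. real (card {s\<in>{..<N}. f s}) / real N) \<longlonglongrightarrow> xi"
    and B: "(\<lambda>N. real (card {s\<in>{..<N}. f s \<and> disc_aoi f s = int \<delta>}) / real N) \<longlonglongrightarrow> p"
  shows "(\<lambda>n. real (card {k\<in>{1..n}. peak_aoi f k = int \<delta>}) / real n) \<longlonglongrightarrow> p / xi"
proof -
  have S: "infinite {s. f s}"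
  proof
    assume fin: "finite {s. f s}"
    let ?c = "real (card {s. f s})"
    have "(\<lambda>N. ?c / real N) \<longlonglongrightarrow> 0" by (rule lim_const_over_n)
    moreover have "\<forall>N. real (card {s\<in>{..<N}. f s}) / real N \<le> ?c / real N"
      using fin by (auto intro!: divide_right_mono card_mono)
    ultimately have "xi \<le> 0" using A by (intro LIMSEQ_le[OF A]) auto
    then show False using xi by simp
  qed
  define T where "T n = Suc (succ_slot f n)" for n
  have Tge: "n \<le> T n" for n
    unfolding T_def succ_slot_def using le_enumerate[OF S, of n] by simp
  have Tlim: "filterlim T sequentially sequentially"
    unfolding filterlim_at_top
  proof
    fix Z show "eventually (\<lambda>n. Z \<le> T n) sequentially"
      unfolding eventually_sequentially using Tge order_trans by blast
  qed
  have A': "(\<lambda>n. real (Suc n) / real (T n)) \<longlonglongrightarrow> xi"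
  proof -
    have "(\<lambda>n. real (card {s\<in>{..<T n}. f s}) / real (T n)) \<longlonglongrightarrow> xi"
      using filterlim_compose[OF A Tlim] by simp
    moreover have "card {s\<in>{..<T n}. f s} = Suc n" for n
      unfolding T_def succ_slot_def by (rule card_below_enum[OF S])
    ultimately show ?thesis by simp
  qed
  have inv: "(\<lambda>n. real (T n) / real (Suc n)) \<longlonglongrightarrow> 1 / xi"
  proof -
    have "(\<lambda>n. inverse (real (Suc n) / real (T n))) \<longlonglongrightarrow> inverse xi"
      by (rule tendsto_inverse[OF A']) (use xi in simp)
    then show ?thesis by (simp add: inverse_eq_divide)
  qed
  have B': "(\<lambda>n. real (card {s\<in>{..<T n}. f s \<and> disc_aoi f s = int \<delta>}) / real (T n)) \<longlonglongrightarrow> p"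
    using filterlim_compose[OF B Tlim] by simp
  define c0 where "c0 = card {s\<in>{..<T 0}. f s \<and> disc_aoi f s = int \<delta>}"
  have lim: "(\<lambda>n. real (card {s\<in>{..<T n}. f s \<and> disc_aoi f s = int \<delta>}) / real (T n) * (real (T n) / real (Suc n))
        * (real (Suc n) / real n) - real c0 / real n) \<longlonglongrightarrow> p * (1 / xi) * 1 - 0"
    by (intro tendsto_intros B' inv LIMSEQ_Suc_n_over_n lim_const_over_n)
  have eq: "eventually (\<lambda>n. real (card {s\<in>{..<T n}. f s \<and> disc_aoi f s = int \<delta>}) / real (T n) * (real (T n) / real (Suc n))
        * (real (Suc n) / real n) - real c0 / real n = real (card {k\<in>{1..n}. peak_aoi f k = int \<delta>}) / real n) sequentially"
    unfolding eventually_sequentially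
  proof (intro exI[of _ 1] allI impI)
    fix n :: nat assume n: "1 \<le> n"
    have sub: "c0 \<le> card {s\<in>{..<T n}. f s \<and> disc_aoi f s = int \<delta>}"
      unfolding c0_def
    proof (rule card_mono)
      have "T 0 \<le> T n" unfolding T_def succ_slot_def using enumerate_mono_le_iff[OF S, of 0 n] by simp
      then show "{s\<in>{..<T 0}. f s \<and> disc_aoi f s = int \<delta>} \<subseteq> {s\<in>{..<T n}. f s \<and> disc_aoi f s = int \<delta>}" by auto
    qed simp
    have pc: "card {k\<in>{1..n}. peak_aoi f k = int \<delta>} = card {s\<in>{..<T n}. f s \<and> disc_aoi f s = int \<delta>} - c0"
      unfolding T_def c0_def by (rule peak_count[OF S])
    have Tpos: "real (T n) > 0" unfolding T_def by simp
    show "real (card {s\<in>{..<T n}. f s \<and> disc_aoi f s = int \<delta>}) / real (T n) * (real (T n) / real (Suc n))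
        * (real (Suc n) / real n) - real c0 / real n = real (card {k\<in>{1..n}. peak_aoi f k = int \<delta>}) / real n"
      unfolding pc using sub Tpos n by (simp add: of_nat_diff diff_divide_distrib del: of_nat_Suc)
  qed
  show ?thesis using Lim_transform_eventually[OF lim eq] by simp
qed


lemma card_diff_real:
  assumes "\<And>s. Q s \<Longrightarrow> P s"
  shows "real (card {s\<in>{..<(N::nat)}. P s \<and> \<not> Q s}) = real (card {s\<in>{..<N}. P s}) - real (card {s\<in>{..<N}. Q s})"
proof -
  have "{s\<in>{..<N}. P s \<and> \<not> Q s} = {s\<in>{..<N}. P s} - {s\<in>{..<N}. Q s}" by auto
  moreover have "{s\<in>{..<N}. Q s} \<subseteq> {s\<in>{..<N}. P s}" using assms by auto
  ultimately have "card {s\<in>{..<N}. P s \<and> \<not> Q s} = card {s\<in>{..<N}. P s} - card {s\<in>{..<N}. Q s}"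
    by (simp add: card_Diff_subset)
  moreover have "card {s\<in>{..<N}. Q s} \<le> card {s\<in>{..<N}. P s}"
    using \<open>{s\<in>{..<N}. Q s} \<subseteq> {s\<in>{..<N}. P s}\<close> by (intro card_mono) auto
  ultimately show ?thesis by (simp add: of_nat_diff)
qed

context bern_seq
begin

lemma Run_iff: "w \<in> space M \<Longrightarrow> w \<in> Run k e s \<longleftrightarrow> (disc_aoi (\<lambda>j. x j w) s \<ge> int k + 2 \<and> (e \<longrightarrow> x s w))"
  unfolding Run_def using disc_aoi_ge[where f="\<lambda>j. x j w" and s=s and k=k] by auto

lemma diff_freq:
  assumes Qd: "\<And>w s. Q w s \<Longrightarrow> P w s"
    and A1: "AE w in M. (\<lambda>N. real (card {s\<in>{..<N}. P w s}) / real N) \<longlonglongrightarrow> a"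
    and A2: "AE w in M. (\<lambda>N. real (card {s\<in>{..<N}. Q w s}) / real N) \<longlonglongrightarrow> b"
  shows "AE w in M. (\<lambda>N. real (card {s\<in>{..<N}. P w s \<and> \<not> Q w s}) / real N) \<longlonglongrightarrow> a - b"
  using A1 A2
proof eventually_elim
  case (elim w)
  have "(\<lambda>N. real (card {s\<in>{..<N}. P w s}) / real N - real (card {s\<in>{..<N}. Q w s}) / real N) \<longlonglongrightarrow> a - b"
    by (intro tendsto_diff elim)
  moreover have "real (card {s\<in>{..<N}. P w s \<and> \<not> Q w s}) / real N = real (card {s\<in>{..<N}. P w s}) / real N - real (card {s\<in>{..<N}. Q w s}) / real N" for N
    by (simp only: card_diff_real[where P="P w" and Q="Q w", OF Qd] diff_divide_distrib)
  ultimately show ?case by simp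
qed

lemma Run_freq: "AE w in M. (\<lambda>N. real (card {s\<in>{..<N}. disc_aoi (\<lambda>j. x j w) s \<ge> int k + 2 \<and> (e \<longrightarrow> x s w)}) / real N)
    \<longlonglongrightarrow> (1 - xi)^k * (if e then xi else 1)"
  using Run_slln[of k e]
proof (rule AE_mp[OF _ AE_I2], intro impI)
  fix w assume w: "w \<in> space M"
  have "{s\<in>{..<N}. w \<in> Run k e s} = {s\<in>{..<N}. disc_aoi (\<lambda>j. x j w) s \<ge> int k + 2 \<and> (e \<longrightarrow> x s w)}" for N
    using Run_iff[OF w] by auto
  then show "(\<lambda>N. real (card {s\<in>{..<N}. w \<in> Run k e s}) / real N) \<longlonglongrightarrow> (1 - xi)^k * (if e then xi else 1) \<Longrightarrow>
    (\<lambda>N. real (card {s\<in>{..<N}. disc_aoi (\<lambda>j. x j w) s \<ge> int k + 2 \<and> (e \<longrightarrow> x s w)}) / real N) \<longlonglongrightarrow> (1 - xi)^k * (if e then xi else 1)"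
    by simp
qed

lemma disc_eq_iff: "2 \<le> \<delta> \<Longrightarrow> (d = int \<delta>) \<longleftrightarrow> (d \<ge> int (\<delta> - 2) + 2 \<and> \<not> d \<ge> int (Suc (\<delta> - 2)) + 2)"
  by auto

lemma disc_freq:
  assumes "2 \<le> \<delta>"
  shows "AE w in M. (\<lambda>N. real (card {s\<in>{..<N}. disc_aoi (\<lambda>j. x j w) s = int \<delta>}) / real N) \<longlonglongrightarrow> xi * (1 - xi) ^ (\<delta> - 2)"
proof -
  have "AE w in M. (\<lambda>N. real (card {s\<in>{..<N}. (disc_aoi (\<lambda>j. x j w) s \<ge> int (\<delta> - 2) + 2 \<and> (False \<longrightarrow> x s w)) \<and>
       \<not> (disc_aoi (\<lambda>j. x j w) s \<ge> int (Suc (\<delta> - 2)) + 2 \<and> (False \<longrightarrow> x s w))}) / real N)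
    \<longlonglongrightarrow> (1 - xi)^(\<delta> - 2) * (if False then xi else 1) - (1 - xi)^(Suc (\<delta> - 2)) * (if False then xi else 1)"
    by (rule diff_freq[OF _ Run_freq Run_freq]) auto
  moreover have "(1 - xi)^(\<delta> - 2) * (if False then xi else 1) - (1 - xi)^(Suc (\<delta> - 2)) * (if False then xi else 1) = xi * (1 - xi) ^ (\<delta> - 2)"
    by (simp add: algebra_simps)
  ultimately show ?thesis using disc_eq_iff[OF assms] by simp
qed

lemma succ_disc_freq:
  assumes "2 \<le> \<delta>"
  shows "AE w in M. (\<lambda>N. real (card {s\<in>{..<N}. x s w \<and> disc_aoi (\<lambda>j. x j w) s = int \<delta>}) / real N) \<longlonglongrightarrow> xi * xi * (1 - xi) ^ (\<delta> - 2)"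
proof -
  have "AE w in M. (\<lambda>N. real (card {s\<in>{..<N}. (disc_aoi (\<lambda>j. x j w) s \<ge> int (\<delta> - 2) + 2 \<and> (True \<longrightarrow> x s w)) \<and>
       \<not> (disc_aoi (\<lambda>j. x j w) s \<ge> int (Suc (\<delta> - 2)) + 2 \<and> (True \<longrightarrow> x s w))}) / real N)
    \<longlonglongrightarrow> (1 - xi)^(\<delta> - 2) * (if True then xi else 1) - (1 - xi)^(Suc (\<delta> - 2)) * (if True then xi else 1)"
    by (rule diff_freq[OF _ Run_freq Run_freq]) auto
  moreover have "(1 - xi)^(\<delta> - 2) * (if True then xi else 1) - (1 - xi)^(Suc (\<delta> - 2)) * (if True then xi else 1) = xi * xi * (1 - xi) ^ (\<delta> - 2)"
    by (simp add: algebra_simps)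
  moreover have "{s\<in>{..<N}. (disc_aoi (\<lambda>j. x j w) s \<ge> int (\<delta> - 2) + 2 \<and> (True \<longrightarrow> x s w)) \<and>
       \<not> (disc_aoi (\<lambda>j. x j w) s \<ge> int (Suc (\<delta> - 2)) + 2 \<and> (True \<longrightarrow> x s w))} = {s\<in>{..<N}. x s w \<and> disc_aoi (\<lambda>j. x j w) s = int \<delta>}" for N w
    using disc_eq_iff[OF assms] by auto
  ultimately show ?thesis by simp
qed

lemma succ_freq: "AE w in M. (\<lambda>N. real (card {s\<in>{..<N}. x s w}) / real N) \<longlonglongrightarrow> xi"
proof -
  have "{s\<in>{..<N}. disc_aoi (\<lambda>j. x j w) s \<ge> int 0 + 2 \<and> (True \<longrightarrow> x s w)} = {s\<in>{..<N}. x s w}" for N w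
    using disc_aoi_ge2[of "\<lambda>j. x j w"] by auto
  then show ?thesis using Run_freq[of 0 True] by simp
qed

lemma peak_freq:
  assumes "2 \<le> \<delta>"
  shows "AE w in M. (\<lambda>n. real (card {k\<in>{1..n}. peak_aoi (\<lambda>j. x j w) k = int \<delta>}) / real n) \<longlonglongrightarrow> xi * (1 - xi) ^ (\<delta> - 2)"
  using succ_freq succ_disc_freq[OF assms]
proof eventually_elim
  case (elim w)
  have "(\<lambda>n. real (card {k\<in>{1..n}. peak_aoi (\<lambda>j. x j w) k = int \<delta>}) / real n) \<longlonglongrightarrow> xi * xi * (1 - xi) ^ (\<delta> - 2) / xi"
    by (rule peak_limit[OF xi_pos]) (use elim in auto)
  then show ?case using xi_pos by simp
qed

lemma avg_aoi: "AE w in M. ((\<lambda>t. integral {0..t} (aoi (\<lambda>j. x j w)) / t) \<longlongrightarrow> 1/2 + 1/xi) at_top"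
  using aoi_sum_slln
proof eventually_elim
  case (elim w)
  have "((\<lambda>t. integral {0..t} (aoi (\<lambda>j. x j w)) / t) \<longlongrightarrow> (1 + 1/xi) - 1/2) at_top"
    by (rule aoi_time_avg) (use elim in \<open>simp add: Dv_def DF_def\<close>)
  then show ?case by (simp add: algebra_simps)
qed

lemma viol_aoi:
  assumes "1 \<le> \<theta>"
  shows "AE w in M. ((\<lambda>t. measure lborel {r\<in>{0..t}. aoi (\<lambda>j. x j w) r > real \<theta>} / t) \<longlongrightarrow> (1 - xi) ^ (\<theta> - 1)) at_top"
  using Run_freq[of "\<theta> - 1" False]
proof eventually_elim
  case (elim w)
  have "{s\<in>{..<N}. disc_aoi (\<lambda>j. x j w) s \<ge> int (\<theta> - 1) + 2 \<and> (False \<longrightarrow> x s w)} = {s\<in>{..<N}. disc_aoi (\<lambda>j. x j w) s \<ge> int \<theta> + 1}" for N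
    using assms by auto
  then show ?case by (intro viol_time_avg) (use elim in simp)
qed

end


theorem theorem3:
  fixes M :: "'a measure" and Y :: "nat \<Rightarrow> nat \<Rightarrow> 'a \<Rightarrow> bool \<times> nat \<times> bool"
    and U E :: nat and alpha :: real and p omega :: "nat \<Rightarrow> real"
  assumes "prob_space M"
    and "U \<ge> 1" and "E \<ge> 1"
    and "0 \<le> alpha" and "alpha \<le> 1"
    and "\<forall>b\<in>{1..E}. 0 \<le> p b" and "(\<Sum>b=1..E. p b) \<le> 1"
    and "\<forall>b\<in>{1..E}. 0 \<le> omega b \<and> omega b \<le> 1"
    and "\<forall>i<U. prob_space.indep_vars M (\<lambda>_. count_space UNIV) (Y i) UNIV"
    and "\<forall>i<U. \<forall>s. distr M (count_space UNIV) (Y i s) = measure_pmf (slot_pmf E alpha p omega)"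
    and "succ_prob E alpha p omega > 0"
  shows "let xi = succ_prob E alpha p omega; T = real U * xi in
    xi \<le> 1 \<and>
    (\<forall>i<U. let X = (\<lambda>w s. delivered (Y i s w)) in
      (\<forall>\<delta>::nat. \<delta> \<ge> 2 \<longrightarrow>
         (AE w in M. (\<lambda>N. card {s\<in>{..<N}. disc_aoi (X w) s = int \<delta>} / real N)
                        \<longlonglongrightarrow> xi * (1 - xi) ^ (\<delta> - 2))) \<and>
      (\<forall>\<delta>::nat. \<delta> \<ge> 2 \<longrightarrow>
         (AE w in M. (\<lambda>n. card {k\<in>{1..n}. peak_aoi (X w) k = int \<delta>} / real n)
                        \<longlonglongrightarrow> xi * (1 - xi) ^ (\<delta> - 2))) \<and>
      (AE w in M. ((\<lambda>t. integral {0..t} (aoi (X w)) / t) \<longlongrightarrow> 1/2 + 1/xi) at_top) \<and>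
      1/2 + 1/xi = 1/2 + real U / T \<and>
      (\<forall>\<theta>::nat. \<theta> \<ge> 1 \<longrightarrow>
         (AE w in M. ((\<lambda>t. measure lborel {r\<in>{0..t}. aoi (X w) r > real \<theta>} / t)
                        \<longlongrightarrow> (1 - xi) ^ (\<theta> - 1)) at_top) \<and>
         (1 - xi) ^ (\<theta> - 1) = (1 - T / real U) ^ (\<theta> - 1)))"
proof -
  let ?xi = "succ_prob E alpha p omega"
  have le1: "?xi \<le> 1"
  proof -
    have "(\<Sum>b=1..E. p b * omega b) \<le> (\<Sum>b=1..E. p b)"
      using assms(6,8) by (intro sum_mono) (simp add: mult_left_le)
    also have "\<dots> \<le> 1" by (rule assms(7))
    finally have s1: "(\<Sum>b=1..E. p b * omega b) \<le> 1" .
    have "?xi = alpha * (\<Sum>b=1..E. p b * omega b)" by (simp add: succ_prob_def)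
    also have "\<dots> \<le> 1 * 1" using s1 assms(4,5,6,8)
      by (intro mult_mono) (auto intro: sum_nonneg)
    finally show ?thesis by simp
  qed
  have U0: "real U > 0" using assms(2) by simp
  have main: "let X = (\<lambda>w s. delivered (Y i s w)) in
      (\<forall>\<delta>::nat. \<delta> \<ge> 2 \<longrightarrow>
         (AE w in M. (\<lambda>N. card {s\<in>{..<N}. disc_aoi (X w) s = int \<delta>} / real N)
                        \<longlonglongrightarrow> ?xi * (1 - ?xi) ^ (\<delta> - 2))) \<and>
      (\<forall>\<delta>::nat. \<delta> \<ge> 2 \<longrightarrow>
         (AE w in M. (\<lambda>n. card {k\<in>{1..n}. peak_aoi (X w) k = int \<delta>} / real n)
                        \<longlonglongrightarrow> ?xi * (1 - ?xi) ^ (\<delta> - 2))) \<and>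
      (AE w in M. ((\<lambda>t. integral {0..t} (aoi (X w)) / t) \<longlongrightarrow> 1/2 + 1/?xi) at_top) \<and>
      1/2 + 1/?xi = 1/2 + real U / (real U * ?xi) \<and>
      (\<forall>\<theta>::nat. \<theta> \<ge> 1 \<longrightarrow>
         (AE w in M. ((\<lambda>t. measure lborel {r\<in>{0..t}. aoi (X w) r > real \<theta>} / t)
                        \<longlongrightarrow> (1 - ?xi) ^ (\<theta> - 1)) at_top) \<and>
         (1 - ?xi) ^ (\<theta> - 1) = (1 - real U * ?xi / real U) ^ (\<theta> - 1))"
    if i: "i < U" for i
  proof -
    interpret bern_seq M "\<lambda>s w. delivered (Y i s w)" ?xi
      by (rule bern_inst) (use assms i le1 in auto)
    show ?thesis
      unfolding Let_def
      using disc_freq peak_freq avg_aoi viol_aoi U0 by (auto simp: field_simps)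
  qed
  show ?thesis
    unfolding Let_def using le1 main unfolding Let_def by blast
qed


end
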